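(* Let $\mathcal G$ be a $\Gamma$-periodic graph with fundamental graph $\mathcal G_*=(\mathcal V_*,\mathcal A_* )$, $\nu=\#\mathcal V_*$, and consider the Schrödinger operators $H=A+Q$ with $\Gamma$-periodic (complex-valued) potentials $Q$. (i) For every $n\in\mathbb N$ and $\mathrm m\in\mathbb Z^d$ the functional $$\mathcal I_n^{\mathrm m}(Q)=\sum_{\substack{r\in\{1,\dots,n\},\ \mathbf c\in\widetilde{\mathcal P}\setminus\mathcal P\\ r|\mathbf c|=n,\ r\tau(\mathbf c)=\mathrm m}}\frac1r\,\omega^r(\mathbf c,Q)$$ is a Floquet spectral invariant of $H$. Moreover, $\{\mathcal I_n^{\mathrm m}(Q):\ n\in\{1,\dots,\nu\},\ \mathrm m\in\mathbb Z^d\}$ is a complete system of Floquet spectral invariants of $H$. (ii) For every $n\in\mathbb N$ the functional $$\mathcal I_n(Q)=\sum_{\substack{r\in\{1,\dots,n\},\ \mathbf c\in\widetilde{\mathcal P}\setminus\mathcal P\\ r|\mathbf c|=n}}\frac1r\,\omega^r(\mathbf c,Q)$$ is a periodic spectral invariant of $H$, and $\{\mathcal I_n(Q):\ n\in\{1,\dots,\nu\}\}$ is a complete system of periodic spectral invariants of $H$.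
   Context: Let $\Gamma$ be a lattice of rank $d$ in $\mathbb R^d$ with basis $\mathfrak a_1,\dots,\mathfrak a_d$ and fundamental cell $\Omega=\{\sum_s x_s\mathfrak a_s: x_s\in[0,1)\}$. A $\Gamma$-periodic graph $\mathcal G=(\mathcal V,\mathcal E)$ is a connected, locally finite graph embedded in $\mathbb R^d$, invariant under translation by every $\mathfrak a\in\Gamma$, with finite quotient $\mathcal G_*=\mathcal G/\Gamma$; $\mathcal G$ has no loops, multiple edges are allowed. Each unoriented edge is counted with both orientations; $\mathcal A$ is the set of oriented edges and $\bar{\mathbf e}=(v,u)$ is the inverse of $\mathbf e=(u,v)$. The fundamental graph $\mathcal G_*=(\mathcal V_*,\mathcal A_* )$ has vertex set $\mathcal V/\Gamma$ and oriented edge set $\mathcal A/\Gamma$ (it may contain loops and multiple edges); $\nu=\#\mathcal V_*$. Every vertex is uniquely $v=v_0+[v]$ with $v_0\in\Omega$, $[v]\in\Gamma$; for $\mathbf e=(u,v)\in\mathcal A$ the edge index is $\tau(\mathbf e)=[v]_{\mathbb A}-[u]_{\mathbb A}\in\mathbb Z^d$, where $\mathbf x_{\mathbb A}$ denotes coordinates with respect to $\mathfrak a_1,\dots,\mathfrak a_d$; it is $\Gamma$-invariant, hence defines $\tau(\mathbf e)$ for $\mathbf e\in\mathcal A_*$, and $\tau(\bar{\mathbf e})=-\tau(\mathbf e)$. A $\Gamma$-periodic potential is a function $Q:\mathcal V_*\to\mathbb C$. For $k\in\mathbb T^d=\mathbb R^d/(2\pi\mathbb Z)^d$ the Floquet operator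 on $\ell^2(\mathcal V_* )\cong\mathbb C^\nu$ is $H(k)=A(k)+Q$, $(A(k)f)(v)=\sum_{\mathbf e=(v,u)\in\mathcal A_*}e^{i\langle\tau(\mathbf e),k\rangle}f(u)$, $(Qf)(v)=Q(v)f(v)$. The Floquet spectrum of $H=A+Q$ is the family $\{\sigma(A(k)+Q):k\in\mathbb T^d\}$; the periodic spectrum is $\sigma(A(0)+Q)$ (eigenvalues with multiplicity). A functional $\mathcal I(Q)$ is a Floquet (resp. periodic) spectral invariant if equality of the Floquet (resp. periodic) spectra of $A+Q_1$ and $A+Q_2$ implies $\mathcal I(Q_1)=\mathcal I(Q_2)$; a family $\{\mathcal I_s\}_{s\in S}$ is a complete system of Floquet (resp. periodic) spectral invariants if: the Floquet (resp. periodic) spectra of $A+Q_1$, $A+Q_2$ coincide iff $\mathcal I_s(Q_1)=\mathcal I_s(Q_2)$ for all $s\in S$. Paths, cycles: a path is $(\mathbf e_1,\dots,\mathbf e_n)$, $\mathbf e_j=(v_j,v_{j+1})$, of length $n$; closed if $v_{n+1}=v_1$; a closed path is prime if it is not the $r$-fold repetition of a closed path with $r\ge2$. A cycle $\mathbf c=[\mathbf e_1,\dots,\mathbf e_n]$ is the class of a closed path under cyclic permutations; prime cycle = class of a prime closed path; $|\mathbf c|=n$; index $\tau(\mathbf c)=\sum_j\tau(\mathbf e_j)$. The modified fundamental graph $\widetilde{\mathcal G}_*$ is $\mathcal G_*$ with one added loop $\mathbf e_v$ at each $v\in\mathcal V_*$, with $\tau(\mathbf e_v)=0$. The weight of a cycle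 $\mathbf c=[\mathbf e_1,\dots,\mathbf e_n]$ in $\widetilde{\mathcal G}_*$ is $\omega(\mathbf c,Q)=\prod_j\omega(\mathbf e_j)$, $\omega(\mathbf e)=1$ for $\mathbf e\in\mathcal A_*$, $\omega(\mathbf e_v)=Q(v)$. $\mathcal P$ and $\widetilde{\mathcal P}$ denote the sets of prime cycles in $\mathcal G_*$ and $\widetilde{\mathcal G}_*$. *)

theory Defs
  imports "HOL-Analysis.Analysis" "HOL-Computational_Algebra.Polynomial"
begin

text \<open>The fundamental graph G_* has vertex set the finite type 'v (so nu = CARD('v)),
 oriented edge set E :: 'e set, source/target maps src, tgt, the edge inversion flip,
 and the edge index tau :: 'e => int^'d (coordinates w.r.t. the lattice basis).\<close>

definition inner_int_real :: "int ^ 'd \<Rightarrow> real ^ 'd \<Rightarrow> real" where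
  "inner_int_real t k = (\<Sum>i\<in>UNIV. real_of_int (t $ i) * k $ i)"

definition is_walk :: "('a \<Rightarrow> 'v) \<Rightarrow> ('a \<Rightarrow> 'v) \<Rightarrow> 'a set \<Rightarrow> 'v \<Rightarrow> 'a list \<Rightarrow> 'v \<Rightarrow> bool" where
  "is_walk src tgt Arcs u xs v \<longleftrightarrow> set xs \<subseteq> Arcs \<and>
     (if xs = [] then u = v
      else src (hd xs) = u \<and> tgt (last xs) = v \<and>
           (\<forall>j. Suc j < length xs \<longrightarrow> tgt (xs ! j) = src (xs ! Suc j)))"

text \<open>Standing assumptions: G_* is the quotient of a connected Gamma-periodic graph
 without loops: each unoriented edge appears with both orientations, tau(inverse e) = - tau e,
 G_* has no loops of index 0 (these would be loops of G), and the lifted graph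
 (vertices V_* x Z^d) is connected, i.e. any two vertices are joined by a path of any prescribed index.\<close>
definition periodic_fundamental_graph ::
  "'e set \<Rightarrow> ('e \<Rightarrow> 'v::finite) \<Rightarrow> ('e \<Rightarrow> 'v) \<Rightarrow> ('e \<Rightarrow> 'e) \<Rightarrow> ('e \<Rightarrow> int ^ 'd) \<Rightarrow> bool" where
  "periodic_fundamental_graph E src tgt flip \<tau> \<longleftrightarrow>
     finite E \<and>
     (\<forall>e\<in>E. flip e \<in> E \<and> flip (flip e) = e \<and> flip e \<noteq> e \<and>
             src (flip e) = tgt e \<and> tgt (flip e) = src e \<and> \<tau> (flip e) = - \<tau> e) \<and>
     (\<forall>e\<in>E. src e = tgt e \<longrightarrow> \<tau> e \<noteq> 0) \<and>
     (\<forall>u v m. \<exists>xs. is_walk src tgt E u xs v \<and> sum_list (map \<tau> xs) = m)"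

definition floquet_matrix ::
  "'e set \<Rightarrow> ('e \<Rightarrow> 'v::finite) \<Rightarrow> ('e \<Rightarrow> 'v) \<Rightarrow> ('e \<Rightarrow> int ^ 'd) \<Rightarrow> ('v \<Rightarrow> complex)
     \<Rightarrow> real ^ 'd \<Rightarrow> complex ^ 'v ^ 'v" where
  "floquet_matrix E src tgt \<tau> Q k =
     (\<chi> v u. (\<Sum>e\<in>{e\<in>E. src e = v \<and> tgt e = u}. exp (\<i> * complex_of_real (inner_int_real (\<tau> e) k)))
            + (if v = u then Q v else 0))"

definition charpoly_mat :: "complex ^ 'n ^ 'n \<Rightarrow> complex poly" where
  "charpoly_mat M = det (\<chi> i j. (if i = j then [:0, 1:] else 0) - [:M $ i $ j:])"

definition spectrum_mset :: "complex ^ 'n ^ 'n \<Rightarrow> complex multiset" where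
  "spectrum_mset M = proots (charpoly_mat M)"

definition same_floquet_spectrum where
  "same_floquet_spectrum E src tgt \<tau> Q1 Q2 \<longleftrightarrow>
     (\<forall>k. spectrum_mset (floquet_matrix E src tgt \<tau> Q1 k) = spectrum_mset (floquet_matrix E src tgt \<tau> Q2 k))"

definition same_periodic_spectrum where
  "same_periodic_spectrum E src tgt \<tau> Q1 Q2 \<longleftrightarrow>
     spectrum_mset (floquet_matrix E src tgt \<tau> Q1 0) = spectrum_mset (floquet_matrix E src tgt \<tau> Q2 0)"

definition closed_path :: "('a \<Rightarrow> 'v) \<Rightarrow> ('a \<Rightarrow> 'v) \<Rightarrow> 'a set \<Rightarrow> 'a list \<Rightarrow> bool" where
  "closed_path src tgt Arcs xs \<longleftrightarrow> xs \<noteq> [] \<and> set xs \<subseteq> Arcs \<and>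
     (\<forall>j<length xs. tgt (xs ! j) = src (xs ! ((Suc j) mod length xs)))"

definition prime_path :: "'a list \<Rightarrow> bool" where
  "prime_path xs \<longleftrightarrow> \<not> (\<exists>ys r. r \<ge> 2 \<and> xs = concat (replicate r ys))"

definition cycle_of :: "'a list \<Rightarrow> 'a list set" where
  "cycle_of xs = range (\<lambda>j. rotate j xs)"

definition prime_cycles :: "('a \<Rightarrow> 'v) \<Rightarrow> ('a \<Rightarrow> 'v) \<Rightarrow> 'a set \<Rightarrow> 'a list set set" where
  "prime_cycles src tgt Arcs = {cycle_of xs | xs. closed_path src tgt Arcs xs \<and> prime_path xs}"

definition cycle_rep :: "'a list set \<Rightarrow> 'a list" where
  "cycle_rep c = (SOME xs. xs \<in> c)"

definition cycle_len :: "'a list set \<Rightarrow> nat" where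
  "cycle_len c = length (cycle_rep c)"

definition cycle_index :: "('a \<Rightarrow> int ^ 'd) \<Rightarrow> 'a list set \<Rightarrow> int ^ 'd" where
  "cycle_index \<tau> c = sum_list (map \<tau> (cycle_rep c))"

definition cycle_weight :: "('a \<Rightarrow> complex) \<Rightarrow> 'a list set \<Rightarrow> complex" where
  "cycle_weight w c = prod_list (map w (cycle_rep c))"

section \<open>Modified fundamental graph: one extra loop e_v (= Inr v) at each vertex\<close>

definition msrc :: "('e \<Rightarrow> 'v) \<Rightarrow> 'e + 'v \<Rightarrow> 'v" where
  "msrc src a = (case a of Inl e \<Rightarrow> src e | Inr v \<Rightarrow> v)"

definition mtgt :: "('e \<Rightarrow> 'v) \<Rightarrow> 'e + 'v \<Rightarrow> 'v" where
  "mtgt tgt a = (case a of Inl e \<Rightarrow> tgt e | Inr v \<Rightarrow> v)"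

definition marcs :: "'e set \<Rightarrow> ('e + 'v) set" where
  "marcs E = Inl ` E \<union> range Inr"

definition mtau :: "('e \<Rightarrow> int ^ 'd) \<Rightarrow> 'e + 'v \<Rightarrow> int ^ 'd" where
  "mtau \<tau> a = (case a of Inl e \<Rightarrow> \<tau> e | Inr v \<Rightarrow> 0)"

definition mweight :: "('v \<Rightarrow> complex) \<Rightarrow> 'e + 'v \<Rightarrow> complex" where
  "mweight Q a = (case a of Inl e \<Rightarrow> 1 | Inr v \<Rightarrow> Q v)"

text \<open>P~ \ P : prime cycles of the modified graph that are not prime cycles of G_*
 (the latter embedded via Inl).\<close>
definition new_prime_cycles :: "'e set \<Rightarrow> ('e \<Rightarrow> 'v) \<Rightarrow> ('e \<Rightarrow> 'v) \<Rightarrow> ('e + 'v) list set set" where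
  "new_prime_cycles E src tgt =
     prime_cycles (msrc src) (mtgt tgt) (marcs E) - (\<lambda>c. map Inl ` c) ` prime_cycles src tgt E"

definition inv_I_nm ::
  "'e set \<Rightarrow> ('e \<Rightarrow> 'v) \<Rightarrow> ('e \<Rightarrow> 'v) \<Rightarrow> ('e \<Rightarrow> int ^ 'd) \<Rightarrow> nat \<Rightarrow> int ^ 'd \<Rightarrow> ('v \<Rightarrow> complex) \<Rightarrow> complex" where
  "inv_I_nm E src tgt \<tau> n m Q =
     (\<Sum>(r, c) \<in> {(r, c). r \<in> {1..n} \<and> c \<in> new_prime_cycles E src tgt \<and>
                        r * cycle_len c = n \<and> int r *s cycle_index (mtau \<tau>) c = m}.
        (1 / of_nat r) * cycle_weight (mweight Q) c ^ r)"

definition inv_I_n ::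
  "'e set \<Rightarrow> ('e \<Rightarrow> 'v) \<Rightarrow> ('e \<Rightarrow> 'v) \<Rightarrow> nat \<Rightarrow> ('v \<Rightarrow> complex) \<Rightarrow> complex" where
  "inv_I_n E src tgt n Q =
     (\<Sum>(r, c) \<in> {(r, c). r \<in> {1..n} \<and> c \<in> new_prime_cycles E src tgt \<and> r * cycle_len c = n}.
        (1 / of_nat r) * cycle_weight (mweight Q) c ^ r)"

end

theory Submission
  imports Defs "Jordan_Normal_Form.Schur_Decomposition" "HOL-Computational_Algebra.Polynomial_FPS"
begin

no_notation Matrix.vec_index (infixl "$" 100)

definition per :: "'a list \<Rightarrow> nat" where
  "per xs = (LEAST j. 0 < j \<and> rotate j xs = xs)"

lemma per_basic:
  assumes "xs \<noteq> []"
  shows "0 < per xs" "rotate (per xs) xs = xs" "per xs \<le> length xs"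
proof -
  have ex: "0 < length xs \<and> rotate (length xs) xs = xs" using assms by simp
  have "0 < per xs \<and> rotate (per xs) xs = xs" unfolding per_def by (rule LeastI[of _ "length xs"], rule ex)
  then show "0 < per xs" "rotate (per xs) xs = xs" by auto
  show "per xs \<le> length xs" unfolding per_def by (rule Least_le, rule ex)
qed

lemma per_min: "0 < j \<Longrightarrow> j < per xs \<Longrightarrow> rotate j xs \<noteq> xs"
  unfolding per_def using not_less_Least by blast

lemma rot_mult: assumes "xs \<noteq> []" shows "rotate (a * per xs) xs = xs"
proof (induction a)
  case (Suc a)
  have "rotate (Suc a * per xs) xs = rotate (per xs) (rotate (a * per xs) xs)"
    by (simp add: rotate_rotate)
  also have "\<dots> = xs" using Suc per_basic[OF assms] by simp
  finally show ?case .
qed simp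

lemma per_dvd_iff:
  assumes "xs \<noteq> []"
  shows "rotate j xs = xs \<longleftrightarrow> per xs dvd j"
proof
  assume "per xs dvd j"
  then obtain a where "j = a * per xs" by (metis dvd_def mult.commute)
  then show "rotate j xs = xs" using rot_mult[OF assms] by simp
next
  assume h: "rotate j xs = xs"
  let ?p = "per xs"
  have "j = j mod ?p + (j div ?p) * ?p" by simp
  then have "rotate j xs = rotate (j mod ?p) (rotate ((j div ?p) * ?p) xs)"
    by (metis rotate_rotate)
  also have "\<dots> = rotate (j mod ?p) xs" using rot_mult[OF assms] by simp
  finally have "rotate (j mod ?p) xs = xs" using h by simp
  moreover have "j mod ?p < ?p" using per_basic[OF assms] by simp
  ultimately have "j mod ?p = 0" using per_min by (metis neq0_conv)
  then show "per xs dvd j" by auto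
qed

lemma per_dvd_len: "xs \<noteq> [] \<Longrightarrow> per xs dvd length xs"
  using per_dvd_iff[of xs "length xs"] by simp

lemma nth_period:
  assumes "xs \<noteq> []"
  shows "i < length xs \<Longrightarrow> xs ! i = xs ! (i mod per xs)"
proof (induction i rule: less_induct)
  case (less i)
  let ?p = "per xs"
  show ?case
  proof (cases "i < ?p")
    case True then show ?thesis by simp
  next
    case False
    then have ge: "?p \<le> i" by simp
    have "xs ! (i - ?p) = rotate ?p xs ! (i - ?p)" using per_basic[OF assms] by simp
    also have "\<dots> = xs ! ((?p + (i - ?p)) mod length xs)"
      using less.prems by (simp add: nth_rotate)
    also have "\<dots> = xs ! i" using ge less.prems by simp
    finally have 1: "xs ! (i - ?p) = xs ! i" .
    have "xs ! (i - ?p) = xs ! ((i - ?p) mod ?p)"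
      using less.IH[of "i - ?p"] less.prems per_basic[OF assms] ge by simp
    also have "(i - ?p) mod ?p = i mod ?p" using ge by (simp add: le_mod_geq)
    finally show ?thesis using 1 by simp
  qed
qed

lemma length_concat_rep[simp]: "length (concat (replicate r ys)) = r * length ys"
  by (induction r) auto

lemma concat_rep_nth:
  assumes "0 < length ys"
  shows "i < r * length ys \<Longrightarrow> concat (replicate r ys) ! i = ys ! (i mod length ys)"
proof (induction r arbitrary: i)
  case 0 then show ?case by simp
next
  case (Suc r)
  show ?case
  proof (cases "i < length ys")
    case True then show ?thesis by (simp add: nth_append)
  next
    case False
    then have "concat (replicate (Suc r) ys) ! i = concat (replicate r ys) ! (i - length ys)"
      by (simp add: nth_append)
    also have "\<dots> = ys ! ((i - length ys) mod length ys)" using Suc False by simp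
    also have "(i - length ys) mod length ys = i mod length ys" using False by (simp add: le_mod_geq)
    finally show ?thesis .
  qed
qed

lemma root_decomp:
  assumes "xs \<noteq> []"
  shows "xs = concat (replicate (length xs div per xs) (take (per xs) xs))"
proof -
  let ?p = "per xs"
  have p: "0 < ?p" "?p \<le> length xs" "?p dvd length xs" using per_basic[OF assms] per_dvd_len[OF assms] by auto
  have len: "length xs div ?p * ?p = length xs" using p by simp
  show ?thesis
  proof (rule nth_equalityI)
    show "length xs = length (concat (replicate (length xs div ?p) (take ?p xs)))"
      using p len by (simp add: min_def)
    fix i assume i: "i < length xs"
    have lt: "length (take ?p xs) = ?p" using p by simp
    have "concat (replicate (length xs div ?p) (take ?p xs)) ! i = take ?p xs ! (i mod ?p)"
      using concat_rep_nth[of "take ?p xs" i "length xs div ?p"] lt p i len by simp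
    also have "\<dots> = xs ! (i mod ?p)" using p by simp
    also have "\<dots> = xs ! i" using nth_period[OF assms i] by simp
    finally show "xs ! i = concat (replicate (length xs div ?p) (take ?p xs)) ! i" by simp
  qed
qed

lemma rot_pow: "rotate (length ys) (concat (replicate r ys)) = concat (replicate r ys)"
proof (cases r)
  case 0 then show ?thesis by simp
next
  case (Suc r')
  have "rotate (length ys) (concat (replicate r ys)) = concat (replicate r' ys) @ ys"
    using Suc by (simp add: rotate_append)
  also have "\<dots> = concat (replicate r' ys @ [ys])" by simp
  also have "\<dots> = concat (replicate r ys)" using Suc by (simp add: replicate_append_same)
  finally show ?thesis .
qed

lemma prime_iff_per:
  assumes "xs \<noteq> []"
  shows "prime_path xs \<longleftrightarrow> per xs = length xs"
proof
  assume pr: "prime_path xs"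
  show "per xs = length xs"
  proof (rule ccontr)
    assume "per xs \<noteq> length xs"
    then have lt: "per xs < length xs" using per_basic[OF assms] by simp
    obtain q where q: "length xs = per xs * q" using per_dvd_len[OF assms] by (auto simp: dvd_def)
    have "q \<ge> 2"
    proof (rule ccontr)
      assume "\<not> q \<ge> 2"
      then have "q = 0 \<or> q = 1" by auto
      then show False using q lt assms by auto
    qed
    moreover have "length xs div per xs = q" using q per_basic[OF assms] by simp
    ultimately show False using pr root_decomp[OF assms] unfolding prime_path_def by metis
  qed
next
  assume h: "per xs = length xs"
  show "prime_path xs" unfolding prime_path_def
  proof
    assume "\<exists>ys r. 2 \<le> r \<and> xs = concat (replicate r ys)"
    then obtain ys r where r: "2 \<le> r" and xs: "xs = concat (replicate r ys)" by blast
    have ys: "ys \<noteq> []" using xs assms by auto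
    have "rotate (length ys) xs = xs" using xs rot_pow by metis
    then have "per xs dvd length ys" using per_dvd_iff[OF assms] by simp
    then have "per xs \<le> length ys" using ys by (simp add: dvd_imp_le)
    moreover have "length xs = r * length ys" using xs by simp
    moreover have "2 * length ys \<le> r * length ys" using r by (rule mult_right_mono) simp
    ultimately show False using h ys by simp
  qed
qed

lemma rotate_inj: "rotate n xs = rotate n ys \<Longrightarrow> xs = ys"
proof (induction n)
  case (Suc n)
  then have "rotate1 (rotate n xs) = rotate1 (rotate n ys)" by simp
  then have "rotate n xs = rotate n ys" by (rule injD[OF inj_rotate1])
  then show ?case using Suc.IH by simp
qed simp

lemma rot_rot_fix: "rotate j (rotate i xs) = rotate i xs \<longleftrightarrow> rotate j xs = xs"
proof -
  have "rotate j (rotate i xs) = rotate i (rotate j xs)" by (simp add: rotate_rotate add.commute)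
  then show ?thesis using rotate_inj[of i "rotate j xs" xs] by auto
qed

lemma per_rotate: "per (rotate i xs) = per xs"
proof -
  have "(\<lambda>j. 0 < j \<and> rotate j (rotate i xs) = rotate i xs) = (\<lambda>j. 0 < j \<and> rotate j xs = xs)"
    using rot_rot_fix by blast
  then show ?thesis unfolding per_def by simp
qed

lemma prime_rotate: "xs \<noteq> [] \<Longrightarrow> prime_path (rotate i xs) \<longleftrightarrow> prime_path xs"
proof -
  assume "xs \<noteq> []"
  then have "prime_path (rotate i xs) \<longleftrightarrow> per (rotate i xs) = length xs"
    using prime_iff_per[of "rotate i xs"] by simp
  also have "per (rotate i xs) = per xs" by (rule per_rotate)
  finally show ?thesis using prime_iff_per[of xs] \<open>xs \<noteq> []\<close> by simp
qed

lemma rotations_distinct: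
  assumes "xs \<noteq> []" "prime_path xs" "i < length xs" "j < length xs" "rotate i xs = rotate j xs"
  shows "i = j"
proof (rule ccontr)
  assume ne: "i \<noteq> j"
  { fix a b assume ab: "a < b" "b < length xs" "rotate a xs = rotate b xs"
    have "rotate (b - a) (rotate a xs) = rotate (b - a + a) xs" by (rule rotate_rotate)
    also have "b - a + a = b" using ab by simp
    finally have "rotate (b - a) (rotate a xs) = rotate a xs" using ab by simp
    then have "rotate (b - a) xs = xs" using rot_rot_fix by blast
    then have "length xs dvd (b - a)" using per_dvd_iff[OF assms(1)] prime_iff_per[OF assms(1)] assms(2) by simp
    moreover have "0 < b - a" "b - a < length xs" using ab by auto
    ultimately have False using dvd_imp_le by (metis not_le) }
  then show False using ne assms(3-5) by (metis linorder_neqE_nat)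
qed

lemma cycle_of_alt: "cycle_of xs = (\<lambda>j. rotate j xs) ` {..<length xs}" if "xs \<noteq> []"
proof -
  have "rotate j xs \<in> (\<lambda>j. rotate j xs) ` {..<length xs}" for j
    using that by (subst rotate_conv_mod) auto
  then show ?thesis unfolding cycle_of_def by auto
qed

lemma card_cycle_of: assumes "xs \<noteq> []" "prime_path xs" shows "card (cycle_of xs) = length xs"
proof -
  have "inj_on (\<lambda>j. rotate j xs) {..<length xs}"
    using rotations_distinct[OF assms] by (auto simp: inj_on_def)
  then show ?thesis using cycle_of_alt[OF assms(1)] by (simp add: card_image)
qed

lemma finite_cycle_of: "finite (cycle_of xs)"
proof (cases "xs = []")
  case True then show ?thesis by (simp add: cycle_of_def)
next
  case False then show ?thesis by (simp add: cycle_of_alt)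
qed

lemma cycle_of_rotate: "cycle_of (rotate i xs) = cycle_of xs"
proof (cases "xs = []")
  case True then show ?thesis by simp
next
  case False
  let ?n = "length xs"
  have "rotate j xs \<in> cycle_of (rotate i xs)" for j
  proof -
    have "(j + (?n - i mod ?n) + i) mod ?n = j mod ?n"
    proof -
      have i': "i mod ?n < ?n" using False by simp
      have e1: "?n - i mod ?n + i = ?n + ?n * (i div ?n)"
        using i' mod_mult_div_eq[of i ?n] by linarith
      define c where "c = Suc (i div ?n)"
      moreover have "?n * c = ?n + ?n * (i div ?n)" by (simp add: c_def)
      ultimately have e: "j + (?n - i mod ?n) + i = j + ?n * c" using e1 by linarith
      have "(j + (?n - i mod ?n) + i) mod ?n = (j + ?n * c) mod ?n" using e by (rule arg_cong)
      also have "(j + ?n * c) mod ?n = j mod ?n" by simp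
      finally show ?thesis .
    qed
    then have "rotate (j + (?n - i mod ?n)) (rotate i xs) = rotate j xs"
      by (metis rotate_conv_mod rotate_rotate length_rotate)
    then show ?thesis unfolding cycle_of_def by (metis rangeI)
  qed
  moreover have "rotate j (rotate i xs) \<in> cycle_of xs" for j
    unfolding cycle_of_def by (simp add: rotate_rotate)
  ultimately show ?thesis unfolding cycle_of_def by auto
qed

lemma mem_cycle_of: "ys \<in> cycle_of xs \<Longrightarrow> cycle_of ys = cycle_of xs"
proof -
  assume "ys \<in> cycle_of xs"
  then obtain j where "ys = rotate j xs" unfolding cycle_of_def by auto
  then show ?thesis by (simp add: cycle_of_rotate)
qed

lemma self_cycle_of: "xs \<in> cycle_of xs"
  unfolding cycle_of_def by (metis rangeI rotate0 id_apply)


section \<open>Generic closed paths and prime cycles\<close>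

lemma closed_rotate:
  assumes "closed_path s t A xs" shows "closed_path s t A (rotate i xs)"
proof -
  let ?n = "length xs"
  have ne: "xs \<noteq> []" and A: "set xs \<subseteq> A" and c: "\<forall>j<?n. t (xs!j) = s (xs ! (Suc j mod ?n))"
    using assms by (auto simp: closed_path_def)
  have p: "0 < ?n" using ne by simp
  have "t (rotate i xs ! j) = s (rotate i xs ! (Suc j mod ?n))" if j: "j < ?n" for j
  proof -
    have 1: "rotate i xs ! j = xs ! ((i + j) mod ?n)" using j by (simp add: nth_rotate)
    have 2: "rotate i xs ! (Suc j mod ?n) = xs ! ((i + Suc j mod ?n) mod ?n)" using p by (simp add: nth_rotate)
    have 3: "(i + Suc j mod ?n) mod ?n = Suc ((i + j) mod ?n) mod ?n"
      by (simp add: mod_add_right_eq mod_Suc_eq)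
    have "t (xs ! ((i + j) mod ?n)) = s (xs ! (Suc ((i + j) mod ?n) mod ?n))" using c p by simp
    then show ?thesis using 1 2 3 by simp
  qed
  then show ?thesis using ne A by (simp add: closed_path_def)
qed

lemma closed_pow_iff:
  assumes r: "0 < r" and ne: "ys \<noteq> []"
  shows "closed_path s t A (concat (replicate r ys)) \<longleftrightarrow> closed_path s t A ys"
proof -
  let ?L = "length ys" and ?xs = "concat (replicate r ys)"
  let ?n = "r * ?L"
  have L: "0 < ?L" using ne by simp
  have n: "0 < ?n" using r L by simp
  have Ln: "?L \<le> ?n" using r by simp
  have xn: "?xs ! j = ys ! (j mod ?L)" if "j < ?n" for j using concat_rep_nth[OF L that] .
  have key: "?xs ! (Suc j mod ?n) = ys ! (Suc j mod ?L)" for j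
  proof -
    have "?xs ! (Suc j mod ?n) = ys ! (Suc j mod ?n mod ?L)" using xn n by simp
    also have "Suc j mod ?n mod ?L = Suc j mod ?L" by (simp add: mod_mod_cancel)
    finally show ?thesis .
  qed
  have set: "set ?xs = set ys" using r by (cases r) auto
  have xsne: "?xs \<noteq> []" using n by (metis length_concat_rep list.size(3) less_irrefl)
  show ?thesis
  proof
    assume cx: "closed_path s t A ?xs"
    have "t (ys ! j) = s (ys ! (Suc j mod ?L))" if j: "j < ?L" for j
    proof -
      have jn: "j < ?n" using less_le_trans[OF j Ln] .
      have "t (?xs ! j) = s (?xs ! (Suc j mod ?n))" using cx jn by (simp add: closed_path_def)
      then show ?thesis using xn[OF jn] key j by simp
    qed
    have sx: "set ?xs \<subseteq> A" using cx unfolding closed_path_def by blast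
    have "set ys \<subseteq> A" using sx unfolding set .
    then show "closed_path s t A ys" using \<open>\<And>j. j < ?L \<Longrightarrow> t (ys ! j) = s (ys ! (Suc j mod ?L))\<close> ne
      unfolding closed_path_def by blast
  next
    assume cy: "closed_path s t A ys"
    have "t (?xs ! j) = s (?xs ! (Suc j mod ?n))" if j: "j < ?n" for j
    proof -
      have jl: "j mod ?L < ?L" using L by simp
      have "t (ys ! (j mod ?L)) = s (ys ! (Suc (j mod ?L) mod ?L))" using cy jl by (simp add: closed_path_def)
      then show ?thesis using xn[OF j] key by (simp add: mod_Suc_eq)
    qed
    then show "closed_path s t A ?xs" using cy set xsne by (simp add: closed_path_def)
  qed
qed

lemma take_concat_rep: "0 < r \<Longrightarrow> take (length ys) (concat (replicate r ys)) = ys"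
  by (cases r) auto

lemma concat_rep_mult: "concat (replicate a (concat (replicate b zs))) = concat (replicate (a * b) zs)"
  by (induction a) (simp_all add: replicate_add)

lemma prime_pow_per:
  assumes pr: "prime_path ys" and ne: "ys \<noteq> []" and r: "0 < r"
  shows "per (concat (replicate r ys)) = length ys"
proof -
  let ?xs = "concat (replicate r ys)" and ?L = "length ys"
  have L: "0 < ?L" using ne by simp
  have xne: "?xs \<noteq> []" using r L by (metis length_concat_rep list.size(3) mult_pos_pos less_irrefl)
  let ?p = "per ?xs"
  have p0: "0 < ?p" using per_basic[OF xne] by simp
  have "rotate ?L ?xs = ?xs" by (rule rot_pow)
  then have pd: "?p dvd ?L" using per_dvd_iff[OF xne] by simp
  then have pL: "?p \<le> ?L" using L by (simp add: dvd_imp_le)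
  have ys_eq: "ys = concat (replicate (?L div ?p) (take ?p ys))"
  proof (rule nth_equalityI)
    show "length ys = length (concat (replicate (?L div ?p) (take ?p ys)))"
      using pL pd by (simp add: min_def)
    fix i assume i: "i < length ys"
    have ltp: "length (take ?p ys) = ?p" using pL by simp
    have iL: "i < (?L div ?p) * ?p" using i pd by simp
    have "concat (replicate (?L div ?p) (take ?p ys)) ! i = take ?p ys ! (i mod ?p)"
      using concat_rep_nth[of "take ?p ys" i "?L div ?p"] ltp p0 iL ne by simp
    also have "\<dots> = ys ! (i mod ?p)" using p0 by simp
    also have "\<dots> = ?xs ! (i mod ?p)"
    proof -
      have a: "i mod ?p < ?L" using p0 pL by (meson less_le_trans mod_less_divisor)
      have c: "1 * ?L \<le> r * ?L" by (rule mult_le_mono1) (use r in simp)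
      have b: "i mod ?p < r * ?L" using a c by linarith
      show ?thesis using concat_rep_nth[OF L b] a by simp
    qed
    also have "\<dots> = ?xs ! i"
    proof -
      have "i < length ?xs" using i r by (simp add: less_le_trans)
      then show ?thesis using nth_period[OF xne] by simp
    qed
    also have "\<dots> = ys ! i"
    proof -
      have "i < r * ?L" using i r by (simp add: less_le_trans)
      then show ?thesis using concat_rep_nth[OF L, of i r] i by simp
    qed
    finally show "ys ! i = concat (replicate (?L div ?p) (take ?p ys)) ! i" by simp
  qed
  have "\<not> 2 \<le> ?L div ?p" using pr ys_eq unfolding prime_path_def by metis
  moreover have "1 \<le> ?L div ?p" using pL p0 by (simp add: div_le_mono[of ?p ?L ?p, simplified] Suc_leI div_greater_zero_iff)
  ultimately have "?L div ?p = 1" by simp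
  then show ?thesis using pd by (metis dvd_mult_div_cancel mult.right_neutral)
qed

lemma take_per_prime:
  assumes ne: "xs \<noteq> []"
  shows "prime_path (take (per xs) xs)"
proof -
  let ?p = "per xs" let ?ys = "take ?p xs"
  have p: "0 < ?p" "?p \<le> length xs" using per_basic[OF ne] by auto
  have ly: "length ?ys = ?p" using p by simp
  show ?thesis unfolding prime_path_def
  proof
    assume "\<exists>zs s. 2 \<le> s \<and> ?ys = concat (replicate s zs)"
    then obtain zs s where s: "2 \<le> s" and ys: "?ys = concat (replicate s zs)" by blast
    have zs: "zs \<noteq> []" using ys ly p by auto
    have "xs = concat (replicate (length xs div ?p) ?ys)" by (rule root_decomp[OF ne])
    also have "\<dots> = concat (replicate ((length xs div ?p) * s) zs)" unfolding ys by (rule concat_rep_mult)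
    finally have "rotate (length zs) xs = xs" by (metis rot_pow)
    then have "?p dvd length zs" using per_dvd_iff[OF ne] by simp
    then have "?p \<le> length zs" using zs by (simp add: dvd_imp_le)
    moreover have "length ?ys = s * length zs" using ys by simp
    moreover have "2 * length zs \<le> s * length zs" using s by (rule mult_right_mono) simp
    moreover have "0 < length zs" using zs by simp
    ultimately show False using ly by linarith
  qed
qed

lemma pc_mem:
  assumes c: "c \<in> prime_cycles s t A" and ys: "ys \<in> c"
  shows "closed_path s t A ys" "prime_path ys" "c = cycle_of ys"
proof -
  obtain xs where xs: "c = cycle_of xs" "closed_path s t A xs" "prime_path xs"
    using c unfolding prime_cycles_def by blast
  obtain j where j: "ys = rotate j xs" using ys xs(1) unfolding cycle_of_def by blast
  have ne: "xs \<noteq> []" using xs(2) by (simp add: closed_path_def)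
  show "closed_path s t A ys" using j closed_rotate[OF xs(2)] by simp
  show "prime_path ys" using j prime_rotate[OF ne] xs(3) by simp
  show "c = cycle_of ys" using j xs(1) by (simp add: cycle_of_rotate)
qed

lemma rep_mem: assumes "c \<in> prime_cycles s t A" shows "cycle_rep c \<in> c"
proof -
  obtain xs where "c = cycle_of xs" using assms unfolding prime_cycles_def by blast
  then have "\<exists>x. x \<in> c" using self_cycle_of by blast
  then show ?thesis unfolding cycle_rep_def by (rule someI_ex)
qed

lemma rep_rot: assumes "c \<in> prime_cycles s t A" "ys \<in> c" shows "\<exists>j. cycle_rep c = rotate j ys"
proof -
  have "cycle_rep c \<in> cycle_of ys" using rep_mem[OF assms(1)] pc_mem(3)[OF assms] by simp
  then show ?thesis unfolding cycle_of_def by blast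
qed

lemma len_mem: assumes "c \<in> prime_cycles s t A" "ys \<in> c" shows "length ys = cycle_len c"
  using rep_rot[OF assms] unfolding cycle_len_def by auto

lemma card_pc: assumes c: "c \<in> prime_cycles s t A" shows "card c = cycle_len c"
proof -
  have r: "cycle_rep c \<in> c" by (rule rep_mem[OF c])
  have "card c = length (cycle_rep c)"
    using card_cycle_of[of "cycle_rep c"] pc_mem[OF c r] by (simp add: closed_path_def)
  then show ?thesis unfolding cycle_len_def .
qed

lemma finite_pc_set:
  assumes finA: "finite A"
  shows "finite {(r,c). r \<in> {1..n} \<and> c \<in> prime_cycles s t A \<and> r * cycle_len c = n}"
proof (rule finite_subset)
  show "{(r,c). r \<in> {1..n} \<and> c \<in> prime_cycles s t A \<and> r * cycle_len c = n}
        \<subseteq> {1..n} \<times> (cycle_of ` {xs. set xs \<subseteq> A \<and> length xs \<le> n})"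
  proof (rule subsetI)
    fix x assume "x \<in> {(r,c). r \<in> {1..n} \<and> c \<in> prime_cycles s t A \<and> r * cycle_len c = n}"
    then obtain r c where x_eq: "x = (r,c)" and r: "r \<in> {1..n}" and c: "c \<in> prime_cycles s t A" and rc: "r * cycle_len c = n"
      by auto
    have rep: "cycle_rep c \<in> c" by (rule rep_mem[OF c])
    have "c = cycle_of (cycle_rep c)" using pc_mem(3)[OF c rep] .
    moreover have "set (cycle_rep c) \<subseteq> A" using pc_mem(1)[OF c rep] by (simp add: closed_path_def)
    moreover have "length (cycle_rep c) \<le> n" using rc r unfolding cycle_len_def
      by (metis atLeastAtMost_iff mult_le_mono1 mult_1)
    ultimately show "x \<in> {1..n} \<times> (cycle_of ` {xs. set xs \<subseteq> A \<and> length xs \<le> n})" using r x_eq by blast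
  qed
  show "finite ({1..n} \<times> (cycle_of ` {xs. set xs \<subseteq> A \<and> length xs \<le> n}))"
    using finite_lists_length_le[OF finA] by simp
qed

lemma cycle_sum:
  assumes finA: "finite A"
  shows "(\<Sum>xs\<in>{xs. closed_path s t A xs \<and> length xs = n}. F xs) =
         (\<Sum>(r,c)\<in>{(r,c). r \<in> {1..n} \<and> c \<in> prime_cycles s t A \<and> r * cycle_len c = n}.
             \<Sum>ys\<in>c. F (concat (replicate r ys)))"
proof -
  let ?P = "{(r,c). r \<in> {1..n} \<and> c \<in> prime_cycles s t A \<and> r * cycle_len c = n}"
  let ?T = "{xs. closed_path s t A xs \<and> length xs = n}"
  have finP: "finite ?P" by (rule finite_pc_set[OF finA])
  have finc: "\<forall>x\<in>?P. finite (snd x)"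
  proof
    fix x assume x: "x \<in> ?P"
    then have c: "snd x \<in> prime_cycles s t A" by auto
    show "finite (snd x)" by (subst pc_mem(3)[OF c rep_mem[OF c]]) (rule finite_cycle_of)
  qed
  have "(\<Sum>(r,c)\<in>?P. \<Sum>ys\<in>c. F (concat (replicate r ys))) =
        (\<Sum>x\<in>?P. \<Sum>ys\<in>snd x. F (concat (replicate (fst x) ys)))"
    by (simp add: case_prod_beta)
  also have "\<dots> = (\<Sum>(x,ys)\<in>Sigma ?P snd. F (concat (replicate (fst x) ys)))"
    by (rule sum.Sigma[OF finP finc])
  also have "\<dots> = (\<Sum>xs\<in>?T. F xs)"
  proof (rule sum.reindex_bij_witness[where j = "\<lambda>(x,ys). concat (replicate (fst x) ys)"
        and i = "\<lambda>xs. ((length xs div per xs, cycle_of (take (per xs) xs)), take (per xs) xs)"])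
    fix a assume a: "a \<in> Sigma ?P snd"
    obtain x ys where a0: "a = (x, ys)" by (cases a)
    obtain r c where x0: "x = (r, c)" by (cases x)
    have a_eq: "a = ((r,c),ys)" using a0 x0 by simp
    have rcP: "(r,c) \<in> ?P" and ys: "ys \<in> c" using a unfolding a_eq by (simp_all only: mem_Sigma_iff snd_conv)
    have r: "r \<in> {1..n}" and c: "c \<in> prime_cycles s t A" and rc: "r * cycle_len c = n"
      using rcP by (simp_all only: mem_Collect_eq case_prod_conv)
    have cl: "closed_path s t A ys" by (rule pc_mem(1)[OF c ys])
    have pr: "prime_path ys" by (rule pc_mem(2)[OF c ys])
    have ceq: "c = cycle_of ys" by (rule pc_mem(3)[OF c ys])
    have ne: "ys \<noteq> []" using cl by (simp add: closed_path_def)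
    have r0: "0 < r" using r by simp
    have lc: "length ys = cycle_len c" by (rule len_mem[OF c ys])
    have per: "per (concat (replicate r ys)) = length ys" by (rule prime_pow_per[OF pr ne r0])
    have tk: "take (length ys) (concat (replicate r ys)) = ys" by (rule take_concat_rep[OF r0])
    have e1: "length (concat (replicate r ys)) div per (concat (replicate r ys)) = r"
      unfolding per using ne by simp
    have e2: "take (per (concat (replicate r ys))) (concat (replicate r ys)) = ys"
      unfolding per by (rule tk)
    show "(\<lambda>xs. ((length xs div per xs, cycle_of (take (per xs) xs)), take (per xs) xs))
            ((\<lambda>(x,ys). concat (replicate (fst x) ys)) a) = a"
      unfolding a_eq by (simp only: case_prod_conv fst_conv e1 e2 ceq[symmetric])
    have "closed_path s t A (concat (replicate r ys))" using closed_pow_iff[OF r0 ne, of s t A] cl by blast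
    moreover have "length (concat (replicate r ys)) = n" using rc lc by simp
    ultimately show "(\<lambda>(x,ys). concat (replicate (fst x) ys)) a \<in> ?T"
      unfolding a_eq by simp
  next
    fix b assume b: "b \<in> ?T"
    then have cb: "closed_path s t A b" and lb: "length b = n" by auto
    have ne: "b \<noteq> []" using cb by (simp add: closed_path_def)
    let ?p = "per b" let ?ys = "take ?p b"
    have p: "0 < ?p" "?p \<le> length b" "?p dvd length b" using per_basic[OF ne] per_dvd_len[OF ne] by auto
    have root: "b = concat (replicate (length b div ?p) ?ys)" by (rule root_decomp[OF ne])
    show "(\<lambda>(x,ys). concat (replicate (fst x) ys))
            ((\<lambda>xs. ((length xs div per xs, cycle_of (take (per xs) xs)), take (per xs) xs)) b) = b"
      using root[symmetric] by simp
    have q0: "0 < length b div ?p" using p by (simp add: div_greater_zero_iff)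
    have qn: "length b div ?p \<le> n" using lb by simp
    have yne: "?ys \<noteq> []" using p ne by simp
    have c2: "closed_path s t A (concat (replicate (length b div ?p) ?ys))"
      by (subst root[symmetric]) (rule cb)
    have cys: "closed_path s t A ?ys" using closed_pow_iff[OF q0 yne, of s t A] c2 by blast
    have pys: "prime_path ?ys" by (rule take_per_prime[OF ne])
    have cpc: "cycle_of ?ys \<in> prime_cycles s t A" unfolding prime_cycles_def using cys pys by blast
    have lys: "cycle_len (cycle_of ?ys) = ?p"
      using len_mem[OF cpc self_cycle_of] p by simp
    have eqn: "(length b div ?p) * cycle_len (cycle_of ?ys) = n" using p lb lys by simp
    have "(length b div ?p, cycle_of ?ys) \<in> ?P" using q0 qn cpc eqn by simp
    then show "(\<lambda>xs. ((length xs div per xs, cycle_of (take (per xs) xs)), take (per xs) xs)) b \<in> Sigma ?P snd"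
      using self_cycle_of[of ?ys] by simp
  next
    fix a assume "a \<in> Sigma ?P snd"
    show "F ((\<lambda>(x,ys). concat (replicate (fst x) ys)) a) = (case a of (x,ys) \<Rightarrow> F (concat (replicate (fst x) ys)))"
      by (simp add: case_prod_beta)
  qed
  finally show ?thesis by (rule sym)
qed


definition mtrace :: "'a::comm_ring_1 mat \<Rightarrow> 'a" where
  "mtrace A = (\<Sum>i = 0..<dim_row A. A $$ (i,i))"

lemma mtrace_comm:
  assumes A: "A \<in> carrier_mat n m" and B: "B \<in> carrier_mat m n"
  shows "mtrace (A * B) = mtrace (B * A)"
proof -
  have "mtrace (A * B) = (\<Sum>i = 0..<n. \<Sum>l = 0..<m. A $$ (i,l) * B $$ (l,i))"
    unfolding mtrace_def using A B by (simp add: scalar_prod_def)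
  also have "\<dots> = (\<Sum>l = 0..<m. \<Sum>i = 0..<n. B $$ (l,i) * A $$ (i,l))"
    by (subst sum.swap) (simp add: mult.commute)
  also have "\<dots> = mtrace (B * A)"
    unfolding mtrace_def using A B by (simp add: scalar_prod_def)
  finally show ?thesis .
qed

lemma ut_pow:
  assumes B: "B \<in> carrier_mat n n" and ut: "upper_triangular B"
  shows "upper_triangular (B ^\<^sub>m k) \<and> (\<forall>i<n. (B ^\<^sub>m k) $$ (i,i) = (B $$ (i,i)) ^ k)"
proof (induction k)
  case 0
  then show ?case using B by auto
next
  case (Suc k)
  let ?X = "B ^\<^sub>m k"
  have X: "?X \<in> carrier_mat n n" using B by simp
  have utX: "upper_triangular ?X" and dX: "\<forall>i<n. ?X $$ (i,i) = (B $$ (i,i)) ^ k" using Suc by auto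
  have entry: "(?X * B) $$ (i,j) = (\<Sum>l = 0..<n. ?X $$ (i,l) * B $$ (l,j))" if "i < n" "j < n" for i j
    using X B that by (simp add: scalar_prod_def)
  have z: "(?X * B) $$ (i,j) = 0" if "j < i" "i < n" for i j
  proof -
    have "?X $$ (i,l) * B $$ (l,j) = 0" if "l < n" for l
    proof (cases "l < i")
      case True
      have "?X $$ (i,l) = 0" using upper_triangularD[OF utX True] X B \<open>i < n\<close> by simp
      then show ?thesis by simp
    next
      case False then have "j < l" using \<open>j < i\<close> by simp
      have "B $$ (l,j) = 0" using upper_triangularD[OF ut \<open>j < l\<close>] B \<open>l < n\<close> by simp
      then show ?thesis by simp
    qed
    then show ?thesis using entry[of i j] that by simp
  qed
  have d: "(?X * B) $$ (i,i) = (B $$ (i,i)) ^ Suc k" if "i < n" for i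
  proof -
    have "?X $$ (i,l) * B $$ (l,i) = (if l = i then ?X $$ (i,i) * B $$ (i,i) else 0)" if "l < n" for l
    proof (cases "l < i")
      case True
      have "?X $$ (i,l) = 0" using upper_triangularD[OF utX True] X B \<open>i < n\<close> by simp
      then show ?thesis using True by simp
    next
      case False
      show ?thesis
      proof (cases "l = i")
        case False then have "i < l" using \<open>\<not> l < i\<close> by simp
        have "B $$ (l,i) = 0" using upper_triangularD[OF ut \<open>i < l\<close>] B \<open>l < n\<close> by simp
        then show ?thesis using False by simp
      qed simp
    qed
    then have "(\<Sum>l = 0..<n. ?X $$ (i,l) * B $$ (l,i)) = (\<Sum>l = 0..<n. (if l = i then ?X $$ (i,i) * B $$ (i,i) else 0))"
      by (intro sum.cong) auto
    also have "\<dots> = ?X $$ (i,i) * B $$ (i,i)" using that by simp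
    finally have "(?X * B) $$ (i,i) = ?X $$ (i,i) * B $$ (i,i)" using entry[of i i] that by simp
    then show ?thesis using dX that by (metis power_Suc2)
  qed
  have "upper_triangular (?X * B)" using z X B by (intro upper_triangularI) simp
  then show ?case using d by simp
qed

lemma eig_trace:
  fixes A :: "complex mat"
  assumes A: "A \<in> carrier_mat n n"
  shows "\<exists>es. length es = n \<and> char_poly A = (\<Prod>e\<leftarrow>es. [:- e, 1:]) \<and> (\<forall>k. mtrace (A ^\<^sub>m k) = (\<Sum>e\<leftarrow>es. e ^ k))"
proof -
  obtain as where as: "char_poly A = (\<Prod>a\<leftarrow>as. [:- a, 1:])" "length as = n"
    using char_poly_factorized[OF A] by blast
  define B where "B = schur_upper_triangular A as"
  have B: "B \<in> carrier_mat n n" "upper_triangular B" "similar_mat A B"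
    using schur_upper_triangular[OF A as(1)] unfolding B_def by auto
  have cp: "char_poly A = (\<Prod>e\<leftarrow>diag_mat B. [:- e, 1:])"
    using char_poly_similar[OF B(3)] char_poly_upper_triangular[OF B(1,2)] by simp
  have len: "length (diag_mat B) = n" using B(1) by (simp add: diag_mat_def)
  obtain P Q where wit: "similar_mat_wit A B P Q" using B(3) unfolding similar_mat_def by blast
  have PQ: "P \<in> carrier_mat n n" "Q \<in> carrier_mat n n" "Q * P = 1\<^sub>m n"
    using wit A unfolding similar_mat_wit_def Let_def by auto
  have tr: "mtrace (A ^\<^sub>m k) = (\<Sum>e\<leftarrow>diag_mat B. e ^ k)" for k
  proof -
    have Bk: "B ^\<^sub>m k \<in> carrier_mat n n" using B(1) by simp
    have "A ^\<^sub>m k = P * B ^\<^sub>m k * Q" by (rule similar_mat_wit_pow_id[OF wit])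
    then have "mtrace (A ^\<^sub>m k) = mtrace (P * (B ^\<^sub>m k * Q))"
      using PQ Bk by (simp add: assoc_mult_mat[of P n n _ n _ n])
    also have "\<dots> = mtrace ((B ^\<^sub>m k * Q) * P)"
      by (rule mtrace_comm[of _ n n]) (use PQ Bk in auto)
    also have "(B ^\<^sub>m k * Q) * P = B ^\<^sub>m k"
      using PQ Bk by (simp add: assoc_mult_mat[of _ n n Q n P n] right_mult_one_mat)
    also have "mtrace (B ^\<^sub>m k) = (\<Sum>i = 0..<n. (B $$ (i,i)) ^ k)"
      unfolding mtrace_def using ut_pow[OF B(1,2), of k] Bk B(1) by simp
    also have "\<dots> = (\<Sum>e\<leftarrow>diag_mat B. e ^ k)"
      using B(1) by (simp add: diag_mat_def sum_list_sum_nth atLeast0LessThan)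
    finally show ?thesis .
  qed
  show ?thesis using len cp tr by blast
qed

lemma proots_linear_prod: "proots (\<Prod>e\<leftarrow>es. [:- e, 1:]) = mset (es :: complex list)"
proof (induction es)
  case (Cons e es)
  have nz: "(\<Prod>e\<leftarrow>es. [:- e, 1:]) \<noteq> (0 :: complex poly)"
    by (auto simp: prod_list_zero_iff)
  have "proots (\<Prod>e\<leftarrow>e # es. [:- e, 1:]) = proots ([:- e, 1:] * (\<Prod>e\<leftarrow>es. [:- e, 1:]))"
    by (simp only: list.map prod_list.Cons)
  also have "\<dots> = proots [:- e, 1:] + proots (\<Prod>e\<leftarrow>es. [:- e, 1:])"
    by (rule proots_mult) (use nz in auto)
  also have "proots [:- e, 1:] = {#e#}" using proots_linear_factor[of "- e"] by simp
  finally show ?case using Cons by simp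
qed simp

section \<open>Newton identities\<close>

definition Rf :: "complex list \<Rightarrow> complex fps" where
  "Rf xs = (\<Prod>e\<leftarrow>xs. (1 - fps_const e * fps_X))"

definition Sf :: "complex list \<Rightarrow> complex fps" where
  "Sf xs = Abs_fps (\<lambda>n. \<Sum>e\<leftarrow>xs. e ^ (n + 1))"

lemma aux_fps: "(1 - A * B) * (S::complex fps) = S - A * (B * S)"
  by (simp add: algebra_simps)

lemma single_S: "fps_const (e::complex) = (1 - fps_const e * fps_X) * Abs_fps (\<lambda>n. e ^ (n + 1))"
proof (rule fps_ext)
  fix n
  show "fps_nth (fps_const e) n = fps_nth ((1 - fps_const e * fps_X) * Abs_fps (\<lambda>n. e ^ (n + 1))) n"
  proof -
    let ?S = "Abs_fps (\<lambda>n. e ^ (n + 1))"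
    have "(1 - fps_const e * fps_X) * ?S = ?S - fps_const e * (fps_X * ?S)" by (rule aux_fps)
    then have "fps_nth ((1 - fps_const e * fps_X) * ?S) n = e ^ (n + 1) - e * (if n = 0 then 0 else e ^ n)"
      by (cases n) (simp_all add: fps_X_mult_nth)
    then show ?thesis by (cases n) simp_all
  qed
qed

lemma Rf_deriv: "fps_deriv (Rf xs) = - (Rf xs * Sf xs)"
proof (induction xs)
  case Nil
  have "Sf [] = 0" unfolding Sf_def by (simp add: fps_ext)
  then show ?case by (simp add: Rf_def)
next
  case (Cons e xs)
  let ?L = "1 - fps_const e * fps_X" and ?Se = "Abs_fps (\<lambda>n. e ^ (n + 1))"
  have S: "Sf (e # xs) = ?Se + Sf xs" unfolding Sf_def by (simp add: fps_ext)
  have R: "Rf (e # xs) = ?L * Rf xs" unfolding Rf_def by simp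
  have dL: "fps_deriv ?L = - fps_const e" by simp
  have "fps_deriv (Rf (e # xs)) = - fps_const e * Rf xs + ?L * fps_deriv (Rf xs)"
    unfolding R by (simp add: dL)
  also have "\<dots> = - (?L * ?Se) * Rf xs - ?L * (Rf xs * Sf xs)"
    using Cons single_S[of e] by simp
  also have "\<dots> = - (Rf (e # xs) * Sf (e # xs))"
    unfolding R S by (simp add: algebra_simps)
  finally show ?case .
qed

lemma Rf_0: "fps_nth (Rf xs) 0 = 1"
  by (induction xs) (simp_all add: Rf_def)

lemma Rf_high: "length xs < k \<Longrightarrow> fps_nth (Rf xs) k = 0"
proof (induction xs arbitrary: k)
  case Nil then show ?case by (simp add: Rf_def)
next
  case (Cons e xs)
  have "fps_nth (Rf (e # xs)) k = (\<Sum>i = 0..k. fps_nth (1 - fps_const e * fps_X) i * fps_nth (Rf xs) (k - i))"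
    by (simp add: Rf_def fps_mult_nth)
  also have "\<dots> = 0"
  proof (rule sum.neutral, rule ballI)
    fix i assume i: "i \<in> {0..k}"
    show "fps_nth (1 - fps_const e * fps_X) i * fps_nth (Rf xs) (k - i) = 0"
    proof (cases "i \<le> 1")
      case True
      then have "length xs < k - i" using Cons.prems by simp
      then show ?thesis using Cons.IH by simp
    next
      case False then show ?thesis by simp
    qed
  qed
  finally show ?case .
qed

lemma Rf_rec: "of_nat (k + 1) * fps_nth (Rf xs) (k + 1) = - (\<Sum>i = 0..k. fps_nth (Rf xs) i * (\<Sum>e\<leftarrow>xs. e ^ (k - i + 1)))"
proof -
  have "of_nat (k + 1) * fps_nth (Rf xs) (k + 1) = fps_nth (fps_deriv (Rf xs)) k" by simp
  also have "\<dots> = - (fps_nth (Rf xs * Sf xs) k)" using Rf_deriv by simp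
  also have "\<dots> = - (\<Sum>i = 0..k. fps_nth (Rf xs) i * (\<Sum>e\<leftarrow>xs. e ^ (k - i + 1)))"
    by (simp add: fps_mult_nth Sf_def)
  finally show ?thesis .
qed

lemma Rf_eq:
  assumes "length es = N" "length fs = N"
    and p: "\<forall>k\<in>{1..N}. (\<Sum>e\<leftarrow>es. e ^ k) = (\<Sum>e\<leftarrow>fs. e ^ k)"
  shows "Rf es = Rf fs"
proof (rule fps_ext)
  fix k
  show "fps_nth (Rf es) k = fps_nth (Rf fs) k"
  proof (cases "k \<le> N")
    case False then show ?thesis using assms Rf_high by simp
  next
    case True
    then show ?thesis
    proof (induction k rule: less_induct)
      case (less k)
      show ?case
      proof (cases k)
        case 0 then show ?thesis by (simp add: Rf_0)
      next
        case (Suc j)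
        have "of_nat (j + 1) * fps_nth (Rf es) (j + 1) = of_nat (j + 1) * fps_nth (Rf fs) (j + 1)"
        proof -
          have "(\<Sum>i = 0..j. fps_nth (Rf es) i * (\<Sum>e\<leftarrow>es. e ^ (j - i + 1))) = (\<Sum>i = 0..j. fps_nth (Rf fs) i * (\<Sum>e\<leftarrow>fs. e ^ (j - i + 1)))"
          proof (rule sum.cong[OF refl])
            fix i assume i: "i \<in> {0..j}"
            have "fps_nth (Rf es) i = fps_nth (Rf fs) i" using less.IH[of i] i Suc less.prems by simp
            moreover have "(\<Sum>e\<leftarrow>es. e ^ (j - i + 1)) = (\<Sum>e\<leftarrow>fs. e ^ (j - i + 1))"
            proof -
              have "j - i + 1 \<in> {1..N}" using i Suc less.prems by auto
              then show ?thesis using p by blast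
            qed
            ultimately show "fps_nth (Rf es) i * (\<Sum>e\<leftarrow>es. e ^ (j - i + 1)) = fps_nth (Rf fs) i * (\<Sum>e\<leftarrow>fs. e ^ (j - i + 1))" by simp
          qed
          then show ?thesis using Rf_rec[of j es] Rf_rec[of j fs] by simp
        qed
        then have "fps_nth (Rf es) (j + 1) = fps_nth (Rf fs) (j + 1)"
          by (metis mult_cancel_left of_nat_eq_0_iff add_eq_0_iff_both_eq_0 one_neq_zero)
        then show ?thesis using Suc by simp
      qed
    qed
  qed
qed

lemma reflect_linear: "reflect_poly [:- e, 1:] = [:1, - (e::complex):]"
  by (cases "e = 0") (simp_all add: reflect_poly_def)

lemma Rf_poly: "Rf xs = fps_of_poly (\<Prod>e\<leftarrow>xs. [:1, - e:])"
  unfolding Rf_def by (induction xs) (simp_all add: fps_of_poly_mult fps_of_poly_pCons algebra_simps)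

lemma newton_mset:
  fixes es fs :: "complex list"
  assumes len: "length es = N" "length fs = N"
    and p: "\<forall>k\<in>{1..N}. (\<Sum>e\<leftarrow>es. e ^ k) = (\<Sum>e\<leftarrow>fs. e ^ k)"
  shows "mset es = mset fs"
proof -
  let ?P = "\<lambda>xs. (\<Prod>e\<leftarrow>xs. [:- e, 1:]) :: complex poly"
  have refl: "reflect_poly (?P xs) = (\<Prod>e\<leftarrow>xs. [:1, - e:])" for xs
    by (simp add: reflect_poly_prod_list o_def reflect_linear)
  have "(\<Prod>e\<leftarrow>es. [:1, - e:]) = (\<Prod>e\<leftarrow>fs. [:1, - e:])"
    using Rf_eq[OF assms] unfolding Rf_poly fps_of_poly_eq_iff .
  then have r: "reflect_poly (?P es) = reflect_poly (?P fs)" using refl by simp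
  have deg: "degree (?P xs) = length xs" for xs
    using degree_linear_factors[of uminus xs] by simp
  have "?P es = ?P fs"
  proof (rule poly_eqI)
    fix j
    show "coeff (?P es) j = coeff (?P fs) j"
    proof (cases "j \<le> N")
      case True
      have "coeff (?P es) j = coeff (reflect_poly (?P es)) (N - j)"
        using True deg[of es] len by (simp add: coeff_reflect_poly)
      also have "\<dots> = coeff (reflect_poly (?P fs)) (N - j)" using r by simp
      also have "\<dots> = coeff (?P fs) j"
        using True deg[of fs] len by (simp add: coeff_reflect_poly)
      finally show ?thesis .
    next
      case False
      then show ?thesis using deg[of es] deg[of fs] len by (simp add: coeff_eq_0)
    qed
  qed
  then show ?thesis using proots_linear_prod[of es] proots_linear_prod[of fs] by simp
qed


lemma inner_int_real_scale: "inner_int_real m (t *\<^sub>R w) = t * inner_int_real m w"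
  unfolding inner_int_real_def by (simp add: sum_distrib_left algebra_simps)

lemma sep_vector:
  fixes S :: "(int^'d) set" assumes S: "finite S"
  shows "\<exists>w::real^'d. inj_on (\<lambda>m. inner_int_real m w) S"
proof -
  obtain f :: "'d \<Rightarrow> nat" and N where f: "f ` UNIV = {i. i < N}" "inj f"
    using finite_imp_inj_to_nat_seg[of "UNIV::'d set"] by auto
  define q where "q m m' = (\<Sum>i\<in>UNIV. monom (real_of_int (m $ i - m' $ i)) (f i))" for m m' :: "int^'d"
  have pq: "poly (q m m') t = inner_int_real m (\<chi> i. t ^ f i) - inner_int_real m' (\<chi> i. t ^ f i)" for m m' t
    unfolding q_def inner_int_real_def by (simp add: poly_sum poly_monom sum_subtractf algebra_simps)
  have qnz: "q m m' \<noteq> 0" if ne: "m \<noteq> m'" for m m'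
  proof
    obtain i0 where i0: "m $ i0 \<noteq> m' $ i0" using ne by (metis Finite_Cartesian_Product.vec_eq_iff)
    assume "q m m' = 0"
    then have "coeff (q m m') (f i0) = 0" by simp
    moreover have "coeff (q m m') (f i0) = real_of_int (m $ i0 - m' $ i0)"
    proof -
      have "coeff (q m m') (f i0) = (\<Sum>i\<in>UNIV. if f i = f i0 then real_of_int (m $ i) - real_of_int (m' $ i) else 0)"
        unfolding q_def by (simp add: coeff_sum)
      also have "\<dots> = (\<Sum>i\<in>UNIV. if i = i0 then real_of_int (m $ i) - real_of_int (m' $ i) else 0)"
        using f(2) by (intro sum.cong) (auto simp: inj_eq)
      also have "\<dots> = real_of_int (m $ i0 - m' $ i0)" by simp
      finally show ?thesis .
    qed
    ultimately show False using i0 by simp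
  qed
  define Bad where "Bad = (\<Union>mm\<in>{(m,m'). m \<in> S \<and> m' \<in> S \<and> m \<noteq> m'}. {t. poly (q (fst mm) (snd mm)) t = 0})"
  have fin: "finite {(m,m'). m \<in> S \<and> m' \<in> S \<and> m \<noteq> m'}"
    by (rule finite_subset[of _ "S \<times> S"]) (use S in auto)
  have "finite Bad" unfolding Bad_def
  proof (rule finite_UN_I[OF fin])
    fix mm assume "mm \<in> {(m,m'). m \<in> S \<and> m' \<in> S \<and> m \<noteq> m'}"
    then have "fst mm \<noteq> snd mm" by auto
    then show "finite {t. poly (q (fst mm) (snd mm)) t = 0}" by (rule poly_roots_finite[OF qnz])
  qed
  then obtain t :: real where t: "t \<notin> Bad" using ex_new_if_finite[OF infinite_UNIV_char_0] by blast
  have "inj_on (\<lambda>m. inner_int_real m (\<chi> i. t ^ f i)) S"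
  proof (rule inj_onI, rule ccontr)
    fix m m' assume "m \<in> S" "m' \<in> S" "inner_int_real m (\<chi> i. t ^ f i) = inner_int_real m' (\<chi> i. t ^ f i)" "m \<noteq> m'"
    then have "t \<in> Bad" unfolding Bad_def using pq[of m m' t] by force
    then show False using t by simp
  qed
  then show ?thesis by blast
qed

lemma exp_sep:
  fixes S :: "(int^'d) set" and c :: "int^'d \<Rightarrow> complex"
  assumes S: "finite S"
    and h: "\<And>k::real^'d. (\<Sum>m\<in>S. c m * exp (\<i> * complex_of_real (inner_int_real m k))) = 0"
  shows "\<forall>m\<in>S. c m = 0"
proof -
  obtain w :: "real^'d" where w: "inj_on (\<lambda>m. inner_int_real m w) S" using sep_vector[OF S] by blast
  define \<alpha> where "\<alpha> m = inner_int_real m w" for m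
  define D where "D = (\<Sum>m\<in>S. \<Sum>m'\<in>S. \<bar>\<alpha> m - \<alpha> m'\<bar>)"
  have Dge: "\<bar>\<alpha> m - \<alpha> m'\<bar> \<le> D" if "m \<in> S" "m' \<in> S" for m m'
  proof -
    have "\<bar>\<alpha> m - \<alpha> m'\<bar> \<le> (\<Sum>m'\<in>S. \<bar>\<alpha> m - \<alpha> m'\<bar>)"
      by (rule member_le_sum) (use that S in auto)
    also have "\<dots> \<le> D" unfolding D_def
      by (rule member_le_sum[where f = "\<lambda>m. \<Sum>m'\<in>S. \<bar>\<alpha> m - \<alpha> m'\<bar>"]) (use that S in \<open>auto intro: sum_nonneg\<close>)
    finally show ?thesis .
  qed
  have D0: "0 \<le> D" unfolding D_def by (auto intro: sum_nonneg)
  define \<epsilon> where "\<epsilon> = 1 / (D + 1)"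
  have eps: "0 < \<epsilon>" using D0 unfolding \<epsilon>_def by simp
  have small: "\<bar>\<epsilon> * (\<alpha> m - \<alpha> m')\<bar> < 1" if "m \<in> S" "m' \<in> S" for m m'
  proof -
    have "\<bar>\<epsilon> * (\<alpha> m - \<alpha> m')\<bar> = \<bar>\<alpha> m - \<alpha> m'\<bar> / (D + 1)" using D0 unfolding \<epsilon>_def by (simp add: abs_mult)
    also have "\<dots> < 1" using Dge[OF that] D0 by simp
    finally show ?thesis .
  qed
  define z where "z m = exp (\<i> * complex_of_real (\<epsilon> * \<alpha> m))" for m
  have zinj: "inj_on z S"
  proof (rule inj_onI)
    fix m m' assume mm: "m \<in> S" "m' \<in> S" "z m = z m'"
    have "exp (\<i> * complex_of_real (\<epsilon> * (\<alpha> m - \<alpha> m'))) = z m / z m'"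
      unfolding z_def by (simp add: exp_diff[symmetric] algebra_simps)
    also have "\<dots> = 1" using mm(3) unfolding z_def by simp
    finally obtain j :: int where j: "\<epsilon> * (\<alpha> m - \<alpha> m') = of_int (2 * j) * pi"
      unfolding exp_eq_1 by auto
    have "j = 0"
    proof (rule ccontr)
      assume "j \<noteq> 0"
      then have "1 \<le> \<bar>real_of_int j\<bar>" by linarith
      then have "2 * pi \<le> \<bar>of_int (2 * j) * pi\<bar>" by (simp add: abs_mult)
      then show False using small[OF mm(1,2)] j pi_gt3 by simp
    qed
    then have "\<alpha> m = \<alpha> m'" using j eps by simp
    then show "m = m'" using w mm unfolding \<alpha>_def by (simp add: inj_on_def)
  qed
  have pw: "(\<Sum>m\<in>S. c m * z m ^ N) = 0" for N :: nat
  proof -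
    have "exp (\<i> * complex_of_real (inner_int_real m ((real N * \<epsilon>) *\<^sub>R w))) = z m ^ N" for m
    proof -
      have e1: "\<i> * complex_of_real (inner_int_real m ((real N * \<epsilon>) *\<^sub>R w)) = of_nat N * (\<i> * complex_of_real (\<epsilon> * \<alpha> m))"
        unfolding inner_int_real_scale \<alpha>_def by simp
      show ?thesis unfolding e1 z_def by (rule exp_of_nat_mult)
    qed
    then show ?thesis using h[of "(real N * \<epsilon>) *\<^sub>R w"] by simp
  qed
  show ?thesis
  proof
    fix m0 assume m0: "m0 \<in> S"
    define p where "p = (\<Prod>m\<in>S - {m0}. [:- z m, 1:])"
    have "(\<Sum>m\<in>S. c m * poly p (z m)) = (\<Sum>m\<in>S. \<Sum>i\<le>degree p. coeff p i * (c m * z m ^ i))"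
      by (simp add: poly_altdef sum_distrib_left algebra_simps)
    also have "\<dots> = (\<Sum>i\<le>degree p. coeff p i * (\<Sum>m\<in>S. c m * z m ^ i))"
      by (subst sum.swap) (simp add: sum_distrib_left)
    also have "\<dots> = 0" using pw by simp
    finally have s0: "(\<Sum>m\<in>S. c m * poly p (z m)) = 0" .
    have pz: "poly p (z m) = (\<Prod>m'\<in>S - {m0}. z m - z m')" for m
      unfolding p_def by (simp add: poly_prod)
    have z0: "(\<Sum>m\<in>S - {m0}. c m * poly p (z m)) = 0"
    proof (rule sum.neutral, rule ballI)
      fix m assume m: "m \<in> S - {m0}"
      have "poly p (z m) = 0" unfolding pz using m S by (auto intro: prod_zero)
      then show "c m * poly p (z m) = 0" by simp
    qed
    have "(\<Sum>m\<in>S. c m * poly p (z m)) = c m0 * poly p (z m0) + (\<Sum>m\<in>S - {m0}. c m * poly p (z m))"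
      using S m0 by (simp add: sum.remove)
    then have "c m0 * poly p (z m0) = 0" using s0 z0 by simp
    moreover have "poly p (z m0) \<noteq> 0"
      unfolding pz using S m0 zinj by (auto simp: prod_zero_iff inj_on_def)
    ultimately show "c m0 = 0" by simp
  qed
qed


lemma det_transfer:
  fixes X :: "'a::comm_ring_1^'v::finite^'v" and h :: "nat \<Rightarrow> 'v"
  assumes bij: "bij_betw h {0..<CARD('v)} UNIV"
  shows "Determinants.det X = Determinant.det (Matrix.mat CARD('v) CARD('v) (\<lambda>(i,j). X $ h i $ h j))"
proof -
  let ?n = "CARD('v)"
  define g where "g = inv_into {0..<?n} h"
  have gh: "g (h i) = i" if "i < ?n" for i using bij that unfolding g_def by (simp add: bij_betw_inv_into_left)
  have hg: "h (g x) = x" for x using bij unfolding g_def by (simp add: bij_betw_inv_into_right)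
  have bijg: "bij_betw g UNIV {0..<?n}" using bij unfolding g_def by (rule bij_betw_inv_into)
  have g_lt: "g x < ?n" for x using bijg by (auto simp: bij_betw_def)
  have pb1: "permutes_bij_finite q UNIV {0..<?n} g h" if "q permutes (UNIV :: 'v set)" for q
    unfolding permutes_bij_finite_def permutes_bij_def permutes_bij_finite_axioms_def
    using that bijg hg by auto
  have pb2: "permutes_bij_finite p {0..<?n} UNIV h g" if "p permutes {0..<?n}" for p
    unfolding permutes_bij_finite_def permutes_bij_def permutes_bij_finite_axioms_def
    using that bij gh by auto
  define J where "J q = (\<lambda>i. if i \<in> {0..<?n} then g (q (h i)) else i)" for q :: "'v \<Rightarrow> 'v"
  define I where "I p = (\<lambda>x. if x \<in> (UNIV :: 'v set) then h (p (g x)) else x)" for p :: "nat \<Rightarrow> nat"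
  have JP: "J q permutes {0..<?n}" "sign (J q) = sign q" if "q permutes UNIV" for q
    using permutes_bij.permutes_p'[OF permutes_bij_finite.axioms(1)[OF pb1[OF that]]]
      permutes_bij_finite.sign_p'[OF pb1[OF that]] unfolding J_def by auto
  have IP: "I p permutes UNIV" if "p permutes {0..<?n}" for p
    using permutes_bij.permutes_p'[OF permutes_bij_finite.axioms(1)[OF pb2[OF that]]] unfolding I_def by auto
  have lhs: "Determinants.det X = (\<Sum>q \<in> {q. q permutes (UNIV :: 'v set)}. of_int (sign q) * (\<Prod>x\<in>UNIV. X $ x $ q x))"
    unfolding Determinants.det_def by simp
  have M: "Matrix.mat ?n ?n (\<lambda>(i,j). X $ h i $ h j) \<in> carrier_mat ?n ?n" by simp
  have rhs: "Determinant.det (Matrix.mat ?n ?n (\<lambda>(i,j). X $ h i $ h j)) =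
     (\<Sum>p \<in> {p. p permutes {0..<?n}}. of_int (sign p) * (\<Prod>i = 0..<?n. X $ h i $ h (p i)))"
  proof -
    have "Determinant.det (Matrix.mat ?n ?n (\<lambda>(i,j). X $ h i $ h j)) =
      (\<Sum>p \<in> {p. p permutes {0..<?n}}. of_int (sign p) * (\<Prod>i = 0..<?n. Matrix.mat ?n ?n (\<lambda>(i,j). X $ h i $ h j) $$ (i, p i)))"
      unfolding Determinant.det_def by simp
    also have "\<dots> = (\<Sum>p \<in> {p. p permutes {0..<?n}}. of_int (sign p) * (\<Prod>i = 0..<?n. X $ h i $ h (p i)))"
    proof (rule sum.cong[OF refl])
      fix p assume "p \<in> {p. p permutes {0..<?n}}"
      then have p: "p permutes {0..<?n}" by simp
      have "(\<Prod>i = 0..<?n. Matrix.mat ?n ?n (\<lambda>(i,j). X $ h i $ h j) $$ (i, p i)) = (\<Prod>i = 0..<?n. X $ h i $ h (p i))"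
      proof (rule prod.cong[OF refl])
        fix i assume i: "i \<in> {0..<?n}"
        then have "p i \<in> {0..<?n}" using p by (simp add: permutes_in_image)
        then show "Matrix.mat ?n ?n (\<lambda>(i,j). X $ h i $ h j) $$ (i, p i) = X $ h i $ h (p i)" using i by simp
      qed
      then show "of_int (sign p) * (\<Prod>i = 0..<?n. Matrix.mat ?n ?n (\<lambda>(i,j). X $ h i $ h j) $$ (i, p i)) =
          of_int (sign p) * (\<Prod>i = 0..<?n. X $ h i $ h (p i))" by simp
    qed
    finally show ?thesis .
  qed
  have "(\<Sum>q \<in> {q. q permutes (UNIV :: 'v set)}. of_int (sign q) * (\<Prod>x\<in>UNIV. X $ x $ q x)) =
     (\<Sum>p \<in> {p. p permutes {0..<?n}}. of_int (sign p) * (\<Prod>i = 0..<?n. X $ h i $ h (p i)))"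
  proof (rule sum.reindex_bij_witness[where i = I and j = J])
    fix q assume "q \<in> {q. q permutes (UNIV :: 'v set)}"
    then have q: "q permutes UNIV" by simp
    show "I (J q) = q" unfolding I_def J_def using g_lt hg by (auto simp: fun_eq_iff)
    show "J q \<in> {p. p permutes {0..<?n}}" using JP[OF q] by simp
    have "(\<Prod>i = 0..<?n. X $ h i $ h (J q i)) = (\<Prod>i = 0..<?n. X $ h i $ q (h i))"
      by (rule prod.cong[OF refl]) (simp add: J_def hg)
    also have "\<dots> = (\<Prod>x\<in>UNIV. X $ x $ q x)"
      by (rule prod.reindex_bij_betw[OF bij, where g = "\<lambda>x. X $ x $ q x"])
    finally show "of_int (sign (J q)) * (\<Prod>i = 0..<?n. X $ h i $ h (J q i)) = of_int (sign q) * (\<Prod>x\<in>UNIV. X $ x $ q x)"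
      using JP[OF q] by simp
  next
    fix p assume "p \<in> {p. p permutes {0..<?n}}"
    then have p: "p permutes {0..<?n}" by simp
    show "J (I p) = p"
    proof
      fix i show "J (I p) i = p i"
      proof (cases "i < ?n")
        case True
        then have "p i < ?n" using p by (simp add: permutes_in_image)
        then show ?thesis using True unfolding I_def J_def by (simp add: gh)
      next
        case False then show ?thesis unfolding J_def using p by (simp add: permutes_not_in)
      qed
    qed
    show "I p \<in> {q. q permutes UNIV}" using IP[OF p] by simp
  qed
  then show ?thesis using lhs rhs by simp
qed


lemma is_walk_Nil: "is_walk s t A v [] u \<longleftrightarrow> v = u"
  by (simp add: is_walk_def)

lemma is_walk_Cons: "is_walk s t A v (a # xs) u \<longleftrightarrow> a \<in> A \<and> s a = v \<and> is_walk s t A (t a) xs u"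
proof (cases xs)
  case Nil then show ?thesis by (simp add: is_walk_def)
next
  case (Cons b ys)
  have "(\<forall>j. Suc j < length (a # b # ys) \<longrightarrow> t ((a # b # ys) ! j) = s ((a # b # ys) ! Suc j)) \<longleftrightarrow>
        t a = s b \<and> (\<forall>j. Suc j < length (b # ys) \<longrightarrow> t ((b # ys) ! j) = s ((b # ys) ! Suc j))"
    (is "?L \<longleftrightarrow> ?R")
  proof
    assume L: ?L
    have "t a = s b" using L[rule_format, of 0] by simp
    moreover have "\<forall>j. Suc j < length (b # ys) \<longrightarrow> t ((b # ys) ! j) = s ((b # ys) ! Suc j)"
    proof (intro allI impI)
      fix j assume "Suc j < length (b # ys)"
      then show "t ((b # ys) ! j) = s ((b # ys) ! Suc j)" using L[rule_format, of "Suc j"] by simp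
    qed
    ultimately show ?R by simp
  next
    assume R: ?R
    show ?L
    proof (intro allI impI)
      fix j assume j: "Suc j < length (a # b # ys)"
      show "t ((a # b # ys) ! j) = s ((a # b # ys) ! Suc j)"
      proof (cases j)
        case 0 then show ?thesis using R by simp
      next
        case (Suc j') then show ?thesis using R j by simp
      qed
    qed
  qed
  then show ?thesis using Cons by (auto simp: is_walk_def)
qed

lemma closed_walk:
  "closed_path s t A xs \<longleftrightarrow> xs \<noteq> [] \<and> is_walk s t A (s (hd xs)) xs (s (hd xs))"
proof (cases "xs = []")
  case True then show ?thesis by (simp add: closed_path_def)
next
  case False
  let ?n = "length xs"
  have n: "0 < ?n" using False by simp
  have "(\<forall>j<?n. t (xs ! j) = s (xs ! (Suc j mod ?n))) \<longleftrightarrow>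
        t (last xs) = s (hd xs) \<and> (\<forall>j. Suc j < ?n \<longrightarrow> t (xs ! j) = s (xs ! Suc j))" (is "?L \<longleftrightarrow> ?R")
  proof
    assume L: ?L
    have "t (xs ! (?n - 1)) = s (xs ! (Suc (?n - 1) mod ?n))" using L n by simp
    then have "t (last xs) = s (hd xs)" using False n by (simp add: last_conv_nth hd_conv_nth)
    moreover have "t (xs ! j) = s (xs ! Suc j)" if "Suc j < ?n" for j
      using L[rule_format, of j] that by simp
    ultimately show ?R by blast
  next
    assume R: ?R
    show ?L
    proof (intro allI impI)
      fix j assume j: "j < ?n"
      show "t (xs ! j) = s (xs ! (Suc j mod ?n))"
      proof (cases "Suc j < ?n")
        case True then show ?thesis using R by simp
      next
        case False
        then have jj: "j = ?n - 1" using j by simp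
        have "Suc (?n - 1) mod ?n = 0" using n by simp
        then show ?thesis using R \<open>xs \<noteq> []\<close> unfolding jj by (simp add: last_conv_nth hd_conv_nth)
      qed
    qed
  qed
  then show ?thesis using False by (auto simp: closed_path_def is_walk_def)
qed

lemma inner_int_real_add: "inner_int_real (a + b) k = inner_int_real a k + inner_int_real b k"
  unfolding inner_int_real_def by (simp add: sum.distrib distrib_right)

lemma inner_int_real_zero[simp]: "inner_int_real 0 k = 0"
  unfolding inner_int_real_def by simp

definition aw :: "('e \<Rightarrow> int ^ 'd) \<Rightarrow> ('v \<Rightarrow> complex) \<Rightarrow> real ^ 'd \<Rightarrow> 'e + 'v \<Rightarrow> complex" where
  "aw \<tau> Q k a = mweight Q a * exp (\<i> * complex_of_real (inner_int_real (mtau \<tau> a) k))"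

definition exk :: "real ^ 'd \<Rightarrow> int ^ 'd \<Rightarrow> complex" where
  "exk k m = exp (\<i> * complex_of_real (inner_int_real m k))"

lemma prod_aw: "prod_list (map (aw \<tau> Q k) xs) =
   prod_list (map (mweight Q) xs) * exk k (sum_list (map (mtau \<tau>) xs))"
proof (induction xs)
  case Nil then show ?case by (simp add: exk_def)
next
  case (Cons a xs)
  then show ?case by (simp add: aw_def exk_def inner_int_real_add exp_add distrib_left algebra_simps)
qed

lemma floquet_entry:
  fixes E :: "'e set" and src tgt :: "'e \<Rightarrow> 'v::finite"
  assumes finE: "finite E"
  shows "floquet_matrix E src tgt \<tau> Q k $ v $ u =
         (\<Sum>a\<in>{a \<in> marcs E. msrc src a = v \<and> mtgt tgt a = u}. aw \<tau> Q k a)"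
proof -
  let ?X = "{e\<in>E. src e = v \<and> tgt e = u}" and ?Y = "{w. w = v \<and> w = u}"
  have set: "{a \<in> marcs E. msrc src a = v \<and> mtgt tgt a = u} = Inl ` ?X \<union> Inr ` ?Y"
  proof (rule Set.set_eqI)
    fix a show "a \<in> {a \<in> marcs E. msrc src a = v \<and> mtgt tgt a = u} \<longleftrightarrow> a \<in> Inl ` ?X \<union> Inr ` ?Y"
      by (cases a) (auto simp: marcs_def msrc_def mtgt_def)
  qed
  have fY: "finite ?Y" by simp
  have "(\<Sum>a\<in>Inl ` ?X \<union> Inr ` ?Y. aw \<tau> Q k a) = (\<Sum>a\<in>Inl ` ?X. aw \<tau> Q k a) + (\<Sum>a\<in>Inr ` ?Y. aw \<tau> Q k a)"
    by (rule sum.union_disjoint) (use finE in auto)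
  also have "(\<Sum>a\<in>Inl ` ?X. aw \<tau> Q k a) = (\<Sum>e\<in>?X. exp (\<i> * complex_of_real (inner_int_real (\<tau> e) k)))"
    by (subst sum.reindex) (auto simp: aw_def mweight_def mtau_def inj_on_def)
  also have "(\<Sum>a\<in>Inr ` ?Y. aw \<tau> Q k a) = (if v = u then Q v else 0)"
  proof (cases "v = u")
    case True
    then have "?Y = {v}" by auto
    then show ?thesis using True by (simp add: aw_def mweight_def mtau_def)
  next
    case False
    then have Y: "?Y = {}" by auto
    show ?thesis unfolding Y using False by simp
  qed
  finally show ?thesis using set unfolding floquet_matrix_def by simp
qed

section \<open>Matrix powers and traces\<close>

definition AM :: "'e set \<Rightarrow> ('e \<Rightarrow> 'v::finite) \<Rightarrow> ('e \<Rightarrow> 'v) \<Rightarrow> ('e \<Rightarrow> int ^ 'd) \<Rightarrow> (nat \<Rightarrow> 'v)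
   \<Rightarrow> ('v \<Rightarrow> complex) \<Rightarrow> real ^ 'd \<Rightarrow> complex mat" where
  "AM E src tgt \<tau> h Q k = Matrix.mat CARD('v) CARD('v) (\<lambda>(i,j). floquet_matrix E src tgt \<tau> Q k $ h i $ h j)"

lemma AM_carrier[simp]: "AM E src tgt \<tau> h Q k \<in> carrier_mat CARD('v) CARD('v)"
  for src :: "'e \<Rightarrow> 'v::finite"
  unfolding AM_def by simp

lemma pow_left: "A \<in> carrier_mat m m \<Longrightarrow> A ^\<^sub>m Suc n = A * A ^\<^sub>m n"
proof (induction n)
  case 0 then show ?case by simp
next
  case (Suc n)
  have "A ^\<^sub>m Suc (Suc n) = (A * A ^\<^sub>m n) * A" using Suc by simp
  also have "\<dots> = A * (A ^\<^sub>m n * A)" using Suc.prems by (simp add: assoc_mult_mat[of _ m m _ m _ m])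
  finally show ?case by simp
qed

lemma finite_walks:
  assumes "finite A"
  shows "finite {xs. is_walk s t A v xs u \<and> length xs = n}"
  by (rule finite_subset[OF _ finite_lists_length_eq[OF assms, of n]]) (auto simp: is_walk_def)

lemma walk_step:
  fixes E :: "'e set" and src tgt :: "'e \<Rightarrow> 'v::finite"
  assumes finE: "finite E"
  shows "(\<Sum>w\<in>UNIV. (\<Sum>a\<in>{a \<in> marcs E. msrc src a = v \<and> mtgt tgt a = w}. aw \<tau> Q k a) *
            (\<Sum>xs\<in>{xs. is_walk (msrc src) (mtgt tgt) (marcs E) w xs u \<and> length xs = n}. prod_list (map (aw \<tau> Q k) xs)))
       = (\<Sum>ys\<in>{xs. is_walk (msrc src) (mtgt tgt) (marcs E) v xs u \<and> length xs = Suc n}. prod_list (map (aw \<tau> Q k) ys))"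
proof -
  let ?ms = "msrc src" and ?mt = "mtgt tgt" and ?A = "marcs E" and ?f = "aw \<tau> Q k"
  let ?W = "\<lambda>w. {xs. is_walk ?ms ?mt ?A w xs u \<and> length xs = n}"
  let ?S = "{a \<in> ?A. ?ms a = v}"
  have finA: "finite (marcs E :: ('e + 'v) set)" using finE unfolding marcs_def by simp
  have finS: "finite ?S" using finA by simp
  have "(\<Sum>w\<in>UNIV. (\<Sum>a\<in>{a \<in> ?A. ?ms a = v \<and> ?mt a = w}. ?f a) * (\<Sum>xs\<in>?W w. prod_list (map ?f xs)))
      = (\<Sum>w\<in>UNIV. \<Sum>a\<in>{x \<in> ?S. ?mt x = w}. ?f a * (\<Sum>xs\<in>?W (?mt a). prod_list (map ?f xs)))"
  proof (rule sum.cong[OF refl])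
    fix w
    have eq: "{a \<in> ?A. ?ms a = v \<and> ?mt a = w} = {x \<in> ?S. ?mt x = w}" by auto
    show "(\<Sum>a\<in>{a \<in> ?A. ?ms a = v \<and> ?mt a = w}. ?f a) * (\<Sum>xs\<in>?W w. prod_list (map ?f xs))
        = (\<Sum>a\<in>{x \<in> ?S. ?mt x = w}. ?f a * (\<Sum>xs\<in>?W (?mt a). prod_list (map ?f xs)))"
      unfolding eq sum_distrib_right by (rule sum.cong) auto
  qed
  also have "\<dots> = (\<Sum>a\<in>?S. ?f a * (\<Sum>xs\<in>?W (?mt a). prod_list (map ?f xs)))"
    by (rule sum.group[OF finS finite_class.finite_UNIV]) simp
  also have "\<dots> = (\<Sum>a\<in>?S. \<Sum>xs\<in>?W (?mt a). ?f a * prod_list (map ?f xs))"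
    by (simp add: sum_distrib_left)
  also have "\<dots> = (\<Sum>(a,xs)\<in>Sigma ?S (\<lambda>a. ?W (?mt a)). ?f a * prod_list (map ?f xs))"
    by (rule sum.Sigma[OF finS]) (use finite_walks[OF finA] in auto)
  also have "\<dots> = (\<Sum>ys\<in>{xs. is_walk ?ms ?mt ?A v xs u \<and> length xs = Suc n}. prod_list (map ?f ys))"
  proof (rule sum.reindex_bij_witness[where j = "\<lambda>(a,xs). a # xs" and i = "\<lambda>ys. (hd ys, tl ys)"])
    fix a assume "a \<in> Sigma ?S (\<lambda>a. ?W (?mt a))"
    then show "(\<lambda>ys. (hd ys, tl ys)) ((\<lambda>(a,xs). a # xs) a) = a"
      and "(\<lambda>(a,xs). a # xs) a \<in> {xs. is_walk ?ms ?mt ?A v xs u \<and> length xs = Suc n}"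
      and "prod_list (map ?f ((\<lambda>(a,xs). a # xs) a)) = (case a of (a, xs) \<Rightarrow> ?f a * prod_list (map ?f xs))"
      by (auto simp: is_walk_Cons)
  next
    fix b assume b: "b \<in> {xs. is_walk ?ms ?mt ?A v xs u \<and> length xs = Suc n}"
    then obtain a xs where b_eq: "b = a # xs" by (cases b) auto
    show "(\<lambda>(a,xs). a # xs) ((\<lambda>ys. (hd ys, tl ys)) b) = b" using b_eq by simp
    show "(\<lambda>ys. (hd ys, tl ys)) b \<in> Sigma ?S (\<lambda>a. ?W (?mt a))" using b b_eq by (auto simp: is_walk_Cons)
  qed
  finally show ?thesis .
qed

lemma pow_entry:
  fixes E :: "'e set" and src tgt :: "'e \<Rightarrow> 'v::finite"
  assumes finE: "finite E" and bij: "bij_betw h {0..<CARD('v)} UNIV"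
  shows "i < CARD('v) \<Longrightarrow> j < CARD('v) \<Longrightarrow> (AM E src tgt \<tau> h Q k ^\<^sub>m n) $$ (i,j) =
     (\<Sum>xs\<in>{xs. is_walk (msrc src) (mtgt tgt) (marcs E) (h i) xs (h j) \<and> length xs = n}. prod_list (map (aw \<tau> Q k) xs))"
proof (induction n arbitrary: i)
  case 0
  have inj: "h i = h j \<longleftrightarrow> i = j" using bij 0 by (auto simp: bij_betw_def inj_on_def)
  have "{xs. is_walk (msrc src) (mtgt tgt) (marcs E) (h i) xs (h j) \<and> length xs = 0} = (if i = j then {[]} else {})"
    using inj by (auto simp: is_walk_Nil)
  then show ?case using 0 by (simp add: AM_def)
next
  case (Suc n)
  let ?N = "CARD('v)" and ?A = "AM E src tgt \<tau> h Q k" and ?M = "floquet_matrix E src tgt \<tau> Q k"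
  let ?W = "\<lambda>w n. {xs. is_walk (msrc src) (mtgt tgt) (marcs E) w xs (h j) \<and> length xs = n}"
  have "(?A ^\<^sub>m Suc n) $$ (i,j) = (?A * ?A ^\<^sub>m n) $$ (i,j)" using pow_left[OF AM_carrier] by metis
  also have "\<dots> = (\<Sum>l = 0..<?N. ?A $$ (i,l) * (?A ^\<^sub>m n) $$ (l,j))"
    using Suc.prems by (simp add: scalar_prod_def AM_def)
  also have "\<dots> = (\<Sum>l = 0..<?N. ?M $ h i $ h l * (\<Sum>xs\<in>?W (h l) n. prod_list (map (aw \<tau> Q k) xs)))"
    using Suc by (intro sum.cong) (auto simp: AM_def)
  also have "\<dots> = (\<Sum>w\<in>UNIV. ?M $ h i $ w * (\<Sum>xs\<in>?W w n. prod_list (map (aw \<tau> Q k) xs)))"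
    by (rule sum.reindex_bij_betw[OF bij, where g = "\<lambda>w. ?M $ h i $ w * (\<Sum>xs\<in>?W w n. prod_list (map (aw \<tau> Q k) xs))"])
  also have "\<dots> = (\<Sum>ys\<in>?W (h i) (Suc n). prod_list (map (aw \<tau> Q k) ys))"
    unfolding floquet_entry[OF finE] by (rule walk_step[OF finE])
  finally show ?case .
qed

lemma trace_walks:
  fixes E :: "'e set" and src tgt :: "'e \<Rightarrow> 'v::finite"
  assumes finE: "finite E" and bij: "bij_betw h {0..<CARD('v)} UNIV" and n: "0 < n"
  shows "mtrace (AM E src tgt \<tau> h Q k ^\<^sub>m n) =
     (\<Sum>xs\<in>{xs. closed_path (msrc src) (mtgt tgt) (marcs E) xs \<and> length xs = n}. prod_list (map (aw \<tau> Q k) xs))"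
proof -
  let ?N = "CARD('v)"
  let ?W = "\<lambda>v. {xs. is_walk (msrc src) (mtgt tgt) (marcs E) v xs v \<and> length xs = n}"
  let ?C = "{xs. closed_path (msrc src) (mtgt tgt) (marcs E) xs \<and> length xs = n}"
  let ?g = "\<lambda>xs. prod_list (map (aw \<tau> Q k) xs)"
  have finA: "finite (marcs E :: ('e + 'v) set)" using finE unfolding marcs_def by simp
  have "mtrace (AM E src tgt \<tau> h Q k ^\<^sub>m n) = (\<Sum>i = 0..<?N. (AM E src tgt \<tau> h Q k ^\<^sub>m n) $$ (i,i))"
    unfolding mtrace_def by (simp add: AM_def)
  also have "\<dots> = (\<Sum>i = 0..<?N. \<Sum>xs\<in>?W (h i). ?g xs)"
    by (intro sum.cong refl pow_entry[OF finE bij]) auto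
  also have "\<dots> = (\<Sum>v\<in>UNIV. \<Sum>xs\<in>?W v. ?g xs)"
    by (rule sum.reindex_bij_betw[OF bij, where g = "\<lambda>v. \<Sum>xs\<in>?W v. ?g xs"])
  also have "\<dots> = (\<Sum>v\<in>UNIV. \<Sum>xs\<in>{xs \<in> ?C. msrc src (hd xs) = v}. ?g xs)"
  proof (rule sum.cong[OF refl])
    fix v
    have "?W v = {xs \<in> ?C. msrc src (hd xs) = v}"
    proof (rule Set.set_eqI)
      fix xs
      show "xs \<in> ?W v \<longleftrightarrow> xs \<in> {xs \<in> ?C. msrc src (hd xs) = v}"
      proof (cases xs)
        case Nil then show ?thesis using n by simp
      next
        case (Cons a ys)
        then show ?thesis by (auto simp: closed_walk is_walk_Cons)
      qed
    qed
    then show "(\<Sum>xs\<in>?W v. ?g xs) = (\<Sum>xs\<in>{xs \<in> ?C. msrc src (hd xs) = v}. ?g xs)" by simp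
  qed
  also have "\<dots> = (\<Sum>xs\<in>?C. ?g xs)"
  proof (rule sum.group)
    show "finite ?C"
      by (rule finite_subset[OF _ finite_lists_length_eq[OF finA, of n]]) (auto simp: closed_path_def)
  qed auto
  finally show ?thesis .
qed


definition Pset :: "'e set \<Rightarrow> ('e \<Rightarrow> 'v) \<Rightarrow> ('e \<Rightarrow> 'v) \<Rightarrow> nat \<Rightarrow> (nat \<times> ('e + 'v) list set) set" where
  "Pset E src tgt n = {(r,c). r \<in> {1..n} \<and> c \<in> prime_cycles (msrc src) (mtgt tgt) (marcs E) \<and> r * cycle_len c = n}"

lemma wt_pow: "prod_list (map f (concat (replicate r ys))) = prod_list (map f ys) ^ r"
  by (induction r) auto

lemma idx_pow: "sum_list (map (f :: 'a \<Rightarrow> int ^ 'd) (concat (replicate r ys))) = int r *s sum_list (map f ys)"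
  by (induction r) (simp_all add: Finite_Cartesian_Product.vec_eq_iff algebra_simps)

lemma mset_rotate1': "mset (rotate1 xs) = mset xs"
  by (cases xs) auto

lemma mset_rot: "mset (rotate n xs) = mset xs"
  by (induction n) (simp_all add: mset_rotate1')

lemma prod_rot: "prod_list (map (f :: 'a \<Rightarrow> 'b::comm_monoid_mult) (rotate j ys)) = prod_list (map f ys)"
  unfolding prod_mset_prod_list[symmetric] by (simp add: mset_map mset_rot)

lemma sum_rot: "sum_list (map (f :: 'a \<Rightarrow> 'b::comm_monoid_add) (rotate j ys)) = sum_list (map f ys)"
  unfolding sum_mset_sum_list[symmetric] by (simp add: mset_map mset_rot)

lemma trace_cycles:
  fixes E :: "'e set" and src tgt :: "'e \<Rightarrow> 'v::finite" and \<tau> :: "'e \<Rightarrow> int ^ 'd"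
  assumes finE: "finite E" and bij: "bij_betw h {0..<CARD('v)} UNIV" and n: "0 < n"
  shows "mtrace (AM E src tgt \<tau> h Q k ^\<^sub>m n) =
    (\<Sum>(r,c)\<in>Pset E src tgt n. of_nat (cycle_len c) * (cycle_weight (mweight Q) c ^ r * exk k (int r *s cycle_index (mtau \<tau>) c)))"
proof -
  let ?PC = "prime_cycles (msrc src) (mtgt tgt) (marcs E)"
  let ?F = "\<lambda>xs. prod_list (map (mweight Q) xs) * exk k (sum_list (map (mtau \<tau>) xs))"
  have finA: "finite (marcs E :: ('e + 'v) set)" using finE unfolding marcs_def by simp
  have "mtrace (AM E src tgt \<tau> h Q k ^\<^sub>m n) =
     (\<Sum>xs\<in>{xs. closed_path (msrc src) (mtgt tgt) (marcs E) xs \<and> length xs = n}. ?F xs)"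
    unfolding trace_walks[OF finE bij n] prod_aw ..
  also have "\<dots> = (\<Sum>(r,c)\<in>Pset E src tgt n. \<Sum>ys\<in>c. ?F (concat (replicate r ys)))"
    unfolding Pset_def by (rule cycle_sum[OF finA])
  also have "\<dots> = (\<Sum>(r,c)\<in>Pset E src tgt n. of_nat (cycle_len c) * (cycle_weight (mweight Q) c ^ r * exk k (int r *s cycle_index (mtau \<tau>) c)))"
  proof (rule sum.cong[OF refl], clarify)
    fix r c assume "(r,c) \<in> Pset E src tgt n"
    then have c: "c \<in> ?PC" unfolding Pset_def by simp
    have "(\<Sum>ys\<in>c. ?F (concat (replicate r ys))) = (\<Sum>ys\<in>c. cycle_weight (mweight Q) c ^ r * exk k (int r *s cycle_index (mtau \<tau>) c))"
    proof (rule sum.cong[OF refl])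
      fix ys assume ys: "ys \<in> c"
      obtain j where j: "cycle_rep c = rotate j ys" using rep_rot[OF c ys] by blast
      have "cycle_weight (mweight Q) c = prod_list (map (mweight Q) ys)"
        unfolding cycle_weight_def j prod_rot ..
      moreover have "cycle_index (mtau \<tau>) c = sum_list (map (mtau \<tau>) ys)"
        unfolding cycle_index_def j sum_rot ..
      ultimately show "?F (concat (replicate r ys)) = cycle_weight (mweight Q) c ^ r * exk k (int r *s cycle_index (mtau \<tau>) c)"
        by (simp add: wt_pow idx_pow)
    qed
    also have "\<dots> = of_nat (card c) * (cycle_weight (mweight Q) c ^ r * exk k (int r *s cycle_index (mtau \<tau>) c))"
      by simp
    also have "card c = cycle_len c" by (rule card_pc[OF c])
    finally show "(\<Sum>ys\<in>c. ?F (concat (replicate r ys))) =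
        of_nat (cycle_len c) * (cycle_weight (mweight Q) c ^ r * exk k (int r *s cycle_index (mtau \<tau>) c))" .
  qed
  finally show ?thesis .
qed

lemma finite_Pset:
  fixes src tgt :: "'e \<Rightarrow> 'v::finite"
  shows "finite E \<Longrightarrow> finite (Pset E src tgt n)"
  unfolding Pset_def by (rule finite_pc_set) (simp add: marcs_def)

lemma old_weight:
  fixes E :: "'e set" and src tgt :: "'e \<Rightarrow> 'v"
  assumes c: "c \<in> prime_cycles (msrc src) (mtgt tgt) (marcs E)" and nc: "c \<notin> new_prime_cycles E src tgt"
  shows "cycle_weight (mweight Q) c = 1"
proof -
  obtain c0 where c0: "c = map Inl ` c0" using c nc unfolding new_prime_cycles_def by blast
  obtain ys where ys: "cycle_rep c = map Inl ys" using rep_mem[OF c] c0 by blast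
  have "prod_list (map (mweight Q) (map Inl ys)) = 1" by (induction ys) (simp_all add: mweight_def)
  then show ?thesis unfolding cycle_weight_def ys .
qed

lemma split_sum:
  fixes E :: "'e set" and src tgt :: "'e \<Rightarrow> 'v::finite"
  assumes finE: "finite E" and X: "X \<subseteq> Pset E src tgt n"
  shows "(\<Sum>(r,c)\<in>X. of_nat (cycle_len c) * cycle_weight (mweight Q) c ^ r) =
     of_nat n * ((\<Sum>(r,c)\<in>{x\<in>X. snd x \<in> new_prime_cycles E src tgt}. (1 / of_nat r) * cycle_weight (mweight Q) c ^ r)
                + (\<Sum>x\<in>{x\<in>X. snd x \<notin> new_prime_cycles E src tgt}. 1 / of_nat (fst x)))"
proof -
  let ?new = "new_prime_cycles E src tgt"
  let ?f = "\<lambda>(r,c). (1 / of_nat r) * cycle_weight (mweight Q) c ^ r :: complex"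
  have finX: "finite X" using finite_subset[OF X finite_Pset[OF finE]] .
  have "(\<Sum>(r,c)\<in>X. of_nat (cycle_len c) * cycle_weight (mweight Q) c ^ r) = (\<Sum>x\<in>X. of_nat n * ?f x)"
  proof (rule sum.cong[OF refl])
    fix x assume x: "x \<in> X"
    obtain r c where x_eq: "x = (r,c)" by (cases x)
    have "r \<in> {1..n}" "r * cycle_len c = n" using X x unfolding Pset_def x_eq by auto
    then have r0: "of_nat r \<noteq> (0::complex)" and rn: "of_nat r * of_nat (cycle_len c) = (of_nat n :: complex)"
      by (auto simp flip: of_nat_mult)
    then have "of_nat (cycle_len c) = (of_nat n * (1 / of_nat r) :: complex)"
      by (simp add: field_simps)
    then show "(\<lambda>(r,c). of_nat (cycle_len c) * cycle_weight (mweight Q) c ^ r) x = of_nat n * ?f x"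
      unfolding x_eq by simp
  qed
  also have "\<dots> = of_nat n * (\<Sum>x\<in>X. ?f x)" by (simp add: sum_distrib_left)
  also have "(\<Sum>x\<in>X. ?f x) = (\<Sum>x\<in>{x\<in>X. snd x \<in> ?new}. ?f x) + (\<Sum>x\<in>{x\<in>X. snd x \<notin> ?new}. ?f x)"
  proof -
    have "X = {x\<in>X. snd x \<in> ?new} \<union> {x\<in>X. snd x \<notin> ?new}" by auto
    then have "(\<Sum>x\<in>X. ?f x) = (\<Sum>x\<in>{x\<in>X. snd x \<in> ?new} \<union> {x\<in>X. snd x \<notin> ?new}. ?f x)" by simp
    also have "\<dots> = (\<Sum>x\<in>{x\<in>X. snd x \<in> ?new}. ?f x) + (\<Sum>x\<in>{x\<in>X. snd x \<notin> ?new}. ?f x)"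
      by (rule sum.union_disjoint) (use finX in auto)
    finally show ?thesis .
  qed
  also have "(\<Sum>x\<in>{x\<in>X. snd x \<notin> ?new}. ?f x) = (\<Sum>x\<in>{x\<in>X. snd x \<notin> ?new}. 1 / of_nat (fst x))"
  proof (rule sum.cong[OF refl])
    fix x assume x: "x \<in> {x\<in>X. snd x \<notin> ?new}"
    obtain r c where x_eq: "x = (r,c)" by (cases x)
    have nc: "c \<notin> ?new" using x unfolding x_eq by simp
    have "c \<in> prime_cycles (msrc src) (mtgt tgt) (marcs E)" using X x unfolding Pset_def x_eq by auto
    then have "cycle_weight (mweight Q) c = 1" using old_weight nc by blast
    then show "?f x = 1 / of_nat (fst x)" unfolding x_eq by simp
  qed
  finally show ?thesis by (simp add: case_prod_beta)
qed


lemma sum_list_mset_eq: "mset xs = mset ys \<Longrightarrow> sum_list (map (f :: 'a \<Rightarrow> 'b::comm_monoid_add) xs) = sum_list (map f ys)"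
  unfolding sum_mset_sum_list[symmetric] by (simp add: mset_map)

lemma charpoly_eq:
  fixes M :: "complex^'v::finite^'v"
  assumes bij: "bij_betw h {0..<CARD('v)} UNIV"
  shows "charpoly_mat M = char_poly (Matrix.mat CARD('v) CARD('v) (\<lambda>(i,j). M $ h i $ h j))"
proof -
  let ?N = "CARD('v)"
  let ?X = "(\<chi> i j. (if i = j then [:0, 1:] else 0) - [:M $ i $ j:]) :: complex poly^'v^'v"
  let ?A = "Matrix.mat ?N ?N (\<lambda>(i,j). M $ h i $ h j)"
  have inj: "h i = h j \<longleftrightarrow> i = j" if "i < ?N" "j < ?N" for i j
    using bij that by (auto simp: bij_betw_def inj_on_def)
  have "charpoly_mat M = Determinant.det (Matrix.mat ?N ?N (\<lambda>(i,j). ?X $ h i $ h j))"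
    unfolding charpoly_mat_def by (rule det_transfer[OF bij])
  also have "Matrix.mat ?N ?N (\<lambda>(i,j). ?X $ h i $ h j) = char_poly_matrix ?A"
  proof (rule eq_matI)
    fix i j assume "i < dim_row (char_poly_matrix ?A)" "j < dim_col (char_poly_matrix ?A)"
    then have ij: "i < ?N" "j < ?N" by (simp_all add: char_poly_matrix_def)
    show "Matrix.mat ?N ?N (\<lambda>(i,j). ?X $ h i $ h j) $$ (i,j) = char_poly_matrix ?A $$ (i,j)"
      using ij inj[OF ij] by (simp add: char_poly_matrix_def)
  qed (simp_all add: char_poly_matrix_def)
  finally show ?thesis unfolding char_poly_def .
qed

lemma spec_lemma:
  fixes E :: "'e set" and src tgt :: "'e \<Rightarrow> 'v::finite"
  assumes bij: "bij_betw h {0..<CARD('v)} UNIV"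
  shows "\<exists>es. length es = CARD('v) \<and> spectrum_mset (floquet_matrix E src tgt \<tau> Q k) = mset es \<and>
           (\<forall>n. mtrace (AM E src tgt \<tau> h Q k ^\<^sub>m n) = (\<Sum>e\<leftarrow>es. e ^ n))"
proof -
  obtain es where es: "length es = CARD('v)" "char_poly (AM E src tgt \<tau> h Q k) = (\<Prod>e\<leftarrow>es. [:- e, 1:])"
    "\<forall>n. mtrace (AM E src tgt \<tau> h Q k ^\<^sub>m n) = (\<Sum>e\<leftarrow>es. e ^ n)"
    using eig_trace[OF AM_carrier] by blast
  have "spectrum_mset (floquet_matrix E src tgt \<tau> Q k) = proots (char_poly (AM E src tgt \<tau> h Q k))"
    unfolding spectrum_mset_def AM_def by (subst charpoly_eq[OF bij]) (rule refl)
  then show ?thesis using es proots_linear_prod by auto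
qed

definition gfun :: "('e \<Rightarrow> int ^ 'd) \<Rightarrow> nat \<times> ('e + 'v) list set \<Rightarrow> int ^ 'd" where
  "gfun \<tau> x = int (fst x) *s cycle_index (mtau \<tau>) (snd x)"

definition Ms where "Ms E src tgt \<tau> n = gfun \<tau> ` Pset E src tgt n"

definition Kc :: "'e set \<Rightarrow> ('e \<Rightarrow> 'v) \<Rightarrow> ('e \<Rightarrow> 'v) \<Rightarrow> ('e \<Rightarrow> int ^ 'd) \<Rightarrow> nat \<Rightarrow> int ^ 'd \<Rightarrow> complex" where
  "Kc E src tgt \<tau> n m = (\<Sum>x\<in>{x\<in>{x\<in>Pset E src tgt n. gfun \<tau> x = m}. snd x \<notin> new_prime_cycles E src tgt}. 1 / of_nat (fst x))"

definition K0 :: "'e set \<Rightarrow> ('e \<Rightarrow> 'v) \<Rightarrow> ('e \<Rightarrow> 'v) \<Rightarrow> nat \<Rightarrow> complex" where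
  "K0 E src tgt n = (\<Sum>x\<in>{x\<in>Pset E src tgt n. snd x \<notin> new_prime_cycles E src tgt}. 1 / of_nat (fst x))"

lemma inv_I_nm_eq:
  "inv_I_nm E src tgt \<tau> n m Q =
    (\<Sum>(r,c)\<in>{x\<in>{x\<in>Pset E src tgt n. gfun \<tau> x = m}. snd x \<in> new_prime_cycles E src tgt}. (1 / of_nat r) * cycle_weight (mweight Q) c ^ r)"
proof -
  have "{(r, c). r \<in> {1..n} \<and> c \<in> new_prime_cycles E src tgt \<and> r * cycle_len c = n \<and> int r *s cycle_index (mtau \<tau>) c = m}
      = {x\<in>{x\<in>Pset E src tgt n. gfun \<tau> x = m}. snd x \<in> new_prime_cycles E src tgt}"
    by (auto simp: Pset_def gfun_def new_prime_cycles_def)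
  then show ?thesis unfolding inv_I_nm_def by simp
qed

lemma inv_I_n_eq:
  "inv_I_n E src tgt n Q =
    (\<Sum>(r,c)\<in>{x\<in>Pset E src tgt n. snd x \<in> new_prime_cycles E src tgt}. (1 / of_nat r) * cycle_weight (mweight Q) c ^ r)"
proof -
  have "{(r, c). r \<in> {1..n} \<and> c \<in> new_prime_cycles E src tgt \<and> r * cycle_len c = n}
      = {x\<in>Pset E src tgt n. snd x \<in> new_prime_cycles E src tgt}"
    by (auto simp: Pset_def new_prime_cycles_def)
  then show ?thesis unfolding inv_I_n_def by simp
qed

lemma inv_zero: "m \<notin> Ms E src tgt \<tau> n \<Longrightarrow> inv_I_nm E src tgt \<tau> n m Q = 0"
proof -
  assume m: "m \<notin> Ms E src tgt \<tau> n"
  have emp: "{x\<in>{x\<in>Pset E src tgt n. gfun \<tau> x = m}. snd x \<in> new_prime_cycles E src tgt} = {}"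
    using m unfolding Ms_def by auto
  show ?thesis unfolding inv_I_nm_eq emp by simp
qed

lemma trace_group:
  fixes E :: "'e set" and src tgt :: "'e \<Rightarrow> 'v::finite" and \<tau> :: "'e \<Rightarrow> int ^ 'd"
  assumes finE: "finite E" and bij: "bij_betw h {0..<CARD('v)} UNIV" and n: "0 < n"
  shows "mtrace (AM E src tgt \<tau> h Q k ^\<^sub>m n) =
    (\<Sum>m\<in>Ms E src tgt \<tau> n. exk k m * (of_nat n * (inv_I_nm E src tgt \<tau> n m Q + Kc E src tgt \<tau> n m)))"
proof -
  let ?P = "Pset E src tgt n" and ?g = "gfun \<tau>"
  let ?H = "\<lambda>(r,c). of_nat (cycle_len c) * cycle_weight (mweight Q) c ^ r :: complex"
  have finP: "finite ?P" by (rule finite_Pset[OF finE])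
  have "mtrace (AM E src tgt \<tau> h Q k ^\<^sub>m n) = (\<Sum>x\<in>?P. exk k (?g x) * ?H x)"
    unfolding trace_cycles[OF finE bij n] by (rule sum.cong) (auto simp: gfun_def)
  also have "\<dots> = (\<Sum>m\<in>?g ` ?P. \<Sum>x\<in>{x\<in>?P. ?g x = m}. exk k (?g x) * ?H x)"
    by (rule sum.image_gen[OF finP])
  also have "\<dots> = (\<Sum>m\<in>?g ` ?P. exk k m * (\<Sum>x\<in>{x\<in>?P. ?g x = m}. ?H x))"
    by (rule sum.cong) (auto simp: sum_distrib_left intro!: sum.cong)
  also have "\<dots> = (\<Sum>m\<in>Ms E src tgt \<tau> n. exk k m * (of_nat n * (inv_I_nm E src tgt \<tau> n m Q + Kc E src tgt \<tau> n m)))"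
    unfolding Ms_def
  proof (rule sum.cong[OF refl])
    fix m
    have "(\<Sum>x\<in>{x\<in>?P. ?g x = m}. ?H x) = of_nat n * (inv_I_nm E src tgt \<tau> n m Q + Kc E src tgt \<tau> n m)"
      unfolding inv_I_nm_eq Kc_def by (rule split_sum[OF finE]) auto
    then show "exk k m * (\<Sum>x\<in>{x\<in>?P. ?g x = m}. ?H x) =
        exk k m * (of_nat n * (inv_I_nm E src tgt \<tau> n m Q + Kc E src tgt \<tau> n m))" by simp
  qed
  finally show ?thesis .
qed

lemma trace_zero:
  fixes E :: "'e set" and src tgt :: "'e \<Rightarrow> 'v::finite" and \<tau> :: "'e \<Rightarrow> int ^ 'd"
  assumes finE: "finite E" and bij: "bij_betw h {0..<CARD('v)} UNIV" and n: "0 < n"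
  shows "mtrace (AM E src tgt \<tau> h Q 0 ^\<^sub>m n) = of_nat n * (inv_I_n E src tgt n Q + K0 E src tgt n)"
proof -
  have ex0: "exk 0 m = 1" for m :: "int ^ 'd" unfolding exk_def inner_int_real_def by simp
  have "mtrace (AM E src tgt \<tau> h Q 0 ^\<^sub>m n) =
      (\<Sum>(r,c)\<in>Pset E src tgt n. of_nat (cycle_len c) * cycle_weight (mweight Q) c ^ r)"
    unfolding trace_cycles[OF finE bij n] ex0 by simp
  also have "\<dots> = of_nat n * (inv_I_n E src tgt n Q + K0 E src tgt n)"
    unfolding inv_I_n_eq K0_def by (rule split_sum[OF finE]) simp
  finally show ?thesis .
qed


theorem theorem2p5:
  fixes E :: "'e set" and src tgt :: "'e \<Rightarrow> 'v::finite" and flip :: "'e \<Rightarrow> 'e"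
    and \<tau> :: "'e \<Rightarrow> int ^ 'd"
  assumes "periodic_fundamental_graph E src tgt flip \<tau>"
  shows
    "(\<forall>Q1 Q2. same_floquet_spectrum E src tgt \<tau> Q1 Q2 \<longrightarrow>
        (\<forall>n m. 0 < n \<longrightarrow> inv_I_nm E src tgt \<tau> n m Q1 = inv_I_nm E src tgt \<tau> n m Q2))
   \<and> (\<forall>Q1 Q2. same_floquet_spectrum E src tgt \<tau> Q1 Q2 \<longleftrightarrow>
        (\<forall>n\<in>{1..CARD('v)}. \<forall>m. inv_I_nm E src tgt \<tau> n m Q1 = inv_I_nm E src tgt \<tau> n m Q2))
   \<and> (\<forall>Q1 Q2. same_periodic_spectrum E src tgt \<tau> Q1 Q2 \<longrightarrow>
        (\<forall>n. 0 < n \<longrightarrow> inv_I_n E src tgt n Q1 = inv_I_n E src tgt n Q2))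
   \<and> (\<forall>Q1 Q2. same_periodic_spectrum E src tgt \<tau> Q1 Q2 \<longleftrightarrow>
        (\<forall>n\<in>{1..CARD('v)}. inv_I_n E src tgt n Q1 = inv_I_n E src tgt n Q2))"
proof -
  have finE: "finite E" using assms unfolding periodic_fundamental_graph_def by blast
  obtain h where bij: "bij_betw h {0..<CARD('v)} (UNIV :: 'v set)"
    using ex_bij_betw_nat_finite[of "UNIV :: 'v set"] by auto
  let ?N = "CARD('v)"
  let ?tr = "\<lambda>Q k n. mtrace (AM E src tgt \<tau> h Q k ^\<^sub>m n)"
  have spec_tr: "?tr Q1 k n = ?tr Q2 k n"
    if "spectrum_mset (floquet_matrix E src tgt \<tau> Q1 k) = spectrum_mset (floquet_matrix E src tgt \<tau> Q2 k)" for Q1 Q2 k n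
  proof -
    obtain es1 where es1: "spectrum_mset (floquet_matrix E src tgt \<tau> Q1 k) = mset es1"
      "\<forall>n. ?tr Q1 k n = (\<Sum>e\<leftarrow>es1. e ^ n)" using spec_lemma[OF bij] by blast
    obtain es2 where es2: "spectrum_mset (floquet_matrix E src tgt \<tau> Q2 k) = mset es2"
      "\<forall>n. ?tr Q2 k n = (\<Sum>e\<leftarrow>es2. e ^ n)" using spec_lemma[OF bij] by blast
    have "mset es1 = mset es2" using that es1 es2 by simp
    then show ?thesis using es1 es2 sum_list_mset_eq by metis
  qed
  have tr_spec: "spectrum_mset (floquet_matrix E src tgt \<tau> Q1 k) = spectrum_mset (floquet_matrix E src tgt \<tau> Q2 k)"
    if "\<forall>n\<in>{1..?N}. ?tr Q1 k n = ?tr Q2 k n" for Q1 Q2 k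
  proof -
    obtain es1 where es1: "length es1 = ?N" "spectrum_mset (floquet_matrix E src tgt \<tau> Q1 k) = mset es1"
      "\<forall>n. ?tr Q1 k n = (\<Sum>e\<leftarrow>es1. e ^ n)" using spec_lemma[OF bij] by blast
    obtain es2 where es2: "length es2 = ?N" "spectrum_mset (floquet_matrix E src tgt \<tau> Q2 k) = mset es2"
      "\<forall>n. ?tr Q2 k n = (\<Sum>e\<leftarrow>es2. e ^ n)" using spec_lemma[OF bij] by blast
    have "mset es1 = mset es2"
      by (rule newton_mset[OF es1(1) es2(1)]) (use that es1(3) es2(3) in auto)
    then show ?thesis using es1 es2 by simp
  qed
  have tr_inv: "inv_I_nm E src tgt \<tau> n m Q1 = inv_I_nm E src tgt \<tau> n m Q2"
    if tr: "\<forall>k. ?tr Q1 k n = ?tr Q2 k n" and n: "0 < n" for Q1 Q2 n m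
  proof -
    let ?S = "Ms E src tgt \<tau> n"
    let ?c = "\<lambda>m. of_nat n * (inv_I_nm E src tgt \<tau> n m Q1 + Kc E src tgt \<tau> n m)
                 - of_nat n * (inv_I_nm E src tgt \<tau> n m Q2 + Kc E src tgt \<tau> n m) :: complex"
    have finS: "finite ?S" unfolding Ms_def by (rule finite_imageI[OF finite_Pset[OF finE]])
    have "\<forall>m\<in>?S. ?c m = 0"
    proof (rule exp_sep[OF finS])
      fix k :: "real ^ 'd"
      have "(\<Sum>m\<in>?S. ?c m * exp (\<i> * complex_of_real (inner_int_real m k))) = ?tr Q1 k n - ?tr Q2 k n"
        unfolding trace_group[OF finE bij n] exk_def by (simp add: sum_subtractf algebra_simps)
      then show "(\<Sum>m\<in>?S. ?c m * exp (\<i> * complex_of_real (inner_int_real m k))) = 0" using tr by simp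
    qed
    then show ?thesis
    proof (cases "m \<in> ?S")
      case True
      then have "?c m = 0" using \<open>\<forall>m\<in>?S. ?c m = 0\<close> by blast
      then show ?thesis using n by simp
    next
      case False then show ?thesis using inv_zero by metis
    qed
  qed
  have part1: "\<forall>Q1 Q2. same_floquet_spectrum E src tgt \<tau> Q1 Q2 \<longrightarrow>
        (\<forall>n m. 0 < n \<longrightarrow> inv_I_nm E src tgt \<tau> n m Q1 = inv_I_nm E src tgt \<tau> n m Q2)"
  proof (intro allI impI)
    fix Q1 Q2 and n :: nat and m assume s: "same_floquet_spectrum E src tgt \<tau> Q1 Q2" and n: "0 < n"
    have "\<forall>k. ?tr Q1 k n = ?tr Q2 k n" using s spec_tr unfolding same_floquet_spectrum_def by blast
    then show "inv_I_nm E src tgt \<tau> n m Q1 = inv_I_nm E src tgt \<tau> n m Q2" using tr_inv n by blast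
  qed
  have part2: "\<forall>Q1 Q2. same_floquet_spectrum E src tgt \<tau> Q1 Q2 \<longleftrightarrow>
        (\<forall>n\<in>{1..?N}. \<forall>m. inv_I_nm E src tgt \<tau> n m Q1 = inv_I_nm E src tgt \<tau> n m Q2)"
  proof (intro allI iffI)
    fix Q1 Q2 assume "same_floquet_spectrum E src tgt \<tau> Q1 Q2"
    then show "\<forall>n\<in>{1..?N}. \<forall>m. inv_I_nm E src tgt \<tau> n m Q1 = inv_I_nm E src tgt \<tau> n m Q2"
      using part1 by auto
  next
    fix Q1 Q2 assume h: "\<forall>n\<in>{1..?N}. \<forall>m. inv_I_nm E src tgt \<tau> n m Q1 = inv_I_nm E src tgt \<tau> n m Q2"
    have "?tr Q1 k n = ?tr Q2 k n" if "n \<in> {1..?N}" for k n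
    proof -
      have n: "0 < n" using that by simp
      show ?thesis unfolding trace_group[OF finE bij n] using h that by simp
    qed
    then show "same_floquet_spectrum E src tgt \<tau> Q1 Q2"
      unfolding same_floquet_spectrum_def using tr_spec by blast
  qed
  have part3: "\<forall>Q1 Q2. same_periodic_spectrum E src tgt \<tau> Q1 Q2 \<longrightarrow>
        (\<forall>n. 0 < n \<longrightarrow> inv_I_n E src tgt n Q1 = inv_I_n E src tgt n Q2)"
  proof (intro allI impI)
    fix Q1 Q2 and n :: nat assume s: "same_periodic_spectrum E src tgt \<tau> Q1 Q2" and n: "0 < n"
    have "?tr Q1 0 n = ?tr Q2 0 n" using s spec_tr unfolding same_periodic_spectrum_def by blast
    then have "of_nat n * (inv_I_n E src tgt n Q1 + K0 E src tgt n) = of_nat n * (inv_I_n E src tgt n Q2 + K0 E src tgt n)"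
      unfolding trace_zero[OF finE bij n] .
    then show "inv_I_n E src tgt n Q1 = inv_I_n E src tgt n Q2" using n by simp
  qed
  have part4: "\<forall>Q1 Q2. same_periodic_spectrum E src tgt \<tau> Q1 Q2 \<longleftrightarrow>
        (\<forall>n\<in>{1..?N}. inv_I_n E src tgt n Q1 = inv_I_n E src tgt n Q2)"
  proof (intro allI iffI)
    fix Q1 Q2 assume "same_periodic_spectrum E src tgt \<tau> Q1 Q2"
    then show "\<forall>n\<in>{1..?N}. inv_I_n E src tgt n Q1 = inv_I_n E src tgt n Q2" using part3 by auto
  next
    fix Q1 Q2 assume h: "\<forall>n\<in>{1..?N}. inv_I_n E src tgt n Q1 = inv_I_n E src tgt n Q2"
    have "?tr Q1 0 n = ?tr Q2 0 n" if "n \<in> {1..?N}" for n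
    proof -
      have n: "0 < n" using that by simp
      show ?thesis unfolding trace_zero[OF finE bij n] using h that by simp
    qed
    then show "same_periodic_spectrum E src tgt \<tau> Q1 Q2"
      unfolding same_periodic_spectrum_def using tr_spec by blast
  qed
  show ?thesis using part1 part2 part3 part4 by blast
qed


end
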